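(* Let $N\in\{1,2,3,4\}$, let $t$ be a positive integer and let $k$ be an integer. Suppose that $\nu$ is a multiplier system on $\Gamma^*(N)$ which takes values among the $2t$-th roots of unity, and that $\nu$ is trivial on $\Gamma_0(Nt,t)$. Then for every prime $p\nmid N$ with $p^{2}\equiv 1\pmod{2t}$ and every integer $n\ge 1$, the operator $T_k^{(t)}(p^{n})$ maps $M_k^!(\Gamma^*(N),\nu)$ into $M_k^!(\Gamma^*(N),\nu^{p^{n}})$.
   Context: For $N\in\{1,2,3,4\}$, $\Gamma^*(N)$ is the Fricke group, the group generated by $\Gamma_0(N)$ and the Fricke involution $W_N=\begin{pmatrix}0&-1\\N&0\end{pmatrix}$; for these $N$ it is generated by $T=\begin{pmatrix}1&1\\0&1\end{pmatrix}$ and $W_N$. For positive integers $M,N$, $\Gamma_0(M,N)=\{\begin{pmatrix}a&b\\c&d\end{pmatrix}\in SL_2(\mathbb{Z}): M\mid c,\ N\mid b\}$. For $\gamma=\begin{pmatrix}a&b\\c&d\end{pmatrix}\in GL_2^+(\mathbb{Q})$ the slash operator is $f|_k\gamma(z)=(\det\gamma)^{k/2}(cz+d)^{-k}f\left(\frac{az+b}{cz+d}\right)$. A multiplier system $\nu$ on a group $\Gamma$ is a character $\Gamma\to\{z\in\mathbb{C}:|z|=1\}$. $M_k^!(\Gamma,\nu)$ denotes the space of holomorphic functions $f$ on the upper half-plane whose poles are supported at the cusps (i.e. meromorphic at the cusps) and which satisfy $f|_k\gamma=\nu(\gamma)f$ for all $\gamma\in\Gamma$. For a prime $p$, the conjugated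 Hecke operator is $f|T_k^{(t)}(p)=p^{k/2-1}\left(\sum_{\lambda=0}^{p-1}f|_k\begin{pmatrix}1&t\lambda\\0&p\end{pmatrix}+f|_k\begin{pmatrix}p&0\\0&1\end{pmatrix}\right)$; on expansions $f=\sum a(n)q^{n/t}$ ($q=e^{2\pi i z}$) it acts by $f|T_k^{(t)}(p)=\sum\left(a(pn)+p^{k-1}a(n/p)\right)q^{n/t}$, with $a(n/p)=0$ if $p\nmid n$. One sets $T_k^{(t)}(1)=\mathrm{id}$ and $T_k^{(t)}(p^{n+1})=T_k^{(t)}(p^n)T_k^{(t)}(p)-p^{k-1}T_k^{(t)}(p^{n-1})$ for $n\ge1$. *)

theory Defs
  imports "HOL-Complex_Analysis.Complex_Analysis" "HOL-Number_Theory.Number_Theory"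
begin

text \<open>2x2 real matrices (a,b,c,d) standing for [[a,b],[c,d]].\<close>
type_synonym mat2 = "real \<times> real \<times> real \<times> real"

definition mmul :: "mat2 \<Rightarrow> mat2 \<Rightarrow> mat2" where
  "mmul x y = (case x of (a,b,c,d) \<Rightarrow> case y of (a',b',c',d') \<Rightarrow>
      (a*a' + b*c', a*b' + b*d', c*a' + d*c', c*b' + d*d'))"

definition mdet :: "mat2 \<Rightarrow> real" where
  "mdet x = (case x of (a,b,c,d) \<Rightarrow> a*d - b*c)"

definition minv :: "mat2 \<Rightarrow> mat2" where
  "minv x = (case x of (a,b,c,d) \<Rightarrow> (d / mdet x, - b / mdet x, - c / mdet x, a / mdet x))"

definition upper_half_plane :: "complex set" where
  "upper_half_plane = {z. Im z > 0}"

definition slash :: "int \<Rightarrow> mat2 \<Rightarrow> (complex \<Rightarrow> complex) \<Rightarrow> complex \<Rightarrow> complex" where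
  "slash k g f z = (case g of (a,b,c,d) \<Rightarrow>
      complex_of_real (mdet g powr (of_int k / 2)) *
      (of_real c * z + of_real d) powi (- k) *
      f ((of_real a * z + of_real b) / (of_real c * z + of_real d)))"

definition Gamma0MN :: "nat \<Rightarrow> nat \<Rightarrow> mat2 set" where
  "Gamma0MN M N = {(of_int a, of_int b, of_int c, of_int d) | a b c d :: int.
      a*d - b*c = 1 \<and> int M dvd c \<and> int N dvd b}"

definition SL2Z :: "mat2 set" where
  "SL2Z = Gamma0MN 1 1"

text \<open>Fricke involution W_N = (0 -1; N 0), normalised to determinant 1 (scalar factor
  1/sqrt N); the slash action of the normalised and unnormalised matrix coincide.\<close>
definition fricke_W :: "nat \<Rightarrow> mat2" where
  "fricke_W N = (0, - 1 / sqrt (real N), sqrt (real N), 0)"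

inductive_set fricke_group :: "nat \<Rightarrow> mat2 set" for N :: nat where
  gamma0: "g \<in> Gamma0MN N 1 \<Longrightarrow> g \<in> fricke_group N"
| fricke: "fricke_W N \<in> fricke_group N"
| mult: "g \<in> fricke_group N \<Longrightarrow> h \<in> fricke_group N \<Longrightarrow> mmul g h \<in> fricke_group N"
| inv: "g \<in> fricke_group N \<Longrightarrow> minv g \<in> fricke_group N"

definition multiplier_system :: "mat2 set \<Rightarrow> (mat2 \<Rightarrow> complex) \<Rightarrow> bool" where
  "multiplier_system G \<nu> \<longleftrightarrow>
     (\<forall>g\<in>G. norm (\<nu> g) = 1) \<and> (\<forall>g\<in>G. \<forall>h\<in>G. \<nu> (mmul g h) = \<nu> g * \<nu> h)"

text \<open>Meromorphic at all cusps: for every sigma in SL2(Z), f|_k sigma is periodic with some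
  positive integer period h and, as a function of q_h = exp(2 pi i z / h) on the punctured unit
  disc, has at worst a pole (no essential singularity) at q_h = 0.\<close>
definition meromorphic_at_cusps :: "int \<Rightarrow> (complex \<Rightarrow> complex) \<Rightarrow> bool" where
  "meromorphic_at_cusps k f \<longleftrightarrow>
     (\<forall>\<sigma>\<in>SL2Z. \<exists>h::nat. h > 0 \<and>
        (\<forall>z\<in>upper_half_plane. slash k \<sigma> f (z + of_nat h) = slash k \<sigma> f z) \<and>
        not_essential (\<lambda>q. slash k \<sigma> f (of_nat h * Ln q / (2 * of_real pi * \<i>))) 0)"

definition weakly_holomorphic_mf :: "int \<Rightarrow> mat2 set \<Rightarrow> (mat2 \<Rightarrow> complex) \<Rightarrow> (complex \<Rightarrow> complex) set" where
  "weakly_holomorphic_mf k G \<nu> = {f. f holomorphic_on upper_half_plane \<and>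
      (\<forall>g\<in>G. \<forall>z\<in>upper_half_plane. slash k g f z = \<nu> g * f z) \<and>
      meromorphic_at_cusps k f}"

definition hecke_p :: "int \<Rightarrow> nat \<Rightarrow> nat \<Rightarrow> (complex \<Rightarrow> complex) \<Rightarrow> complex \<Rightarrow> complex" where
  "hecke_p k t p f z = complex_of_real (real p powr (of_int k / 2 - 1)) *
     ((\<Sum>j=0..<p. slash k (1, real t * real j, 0, real p) f z) + slash k (real p, 0, 0, 1) f z)"

fun hecke_pp :: "int \<Rightarrow> nat \<Rightarrow> nat \<Rightarrow> nat \<Rightarrow> (complex \<Rightarrow> complex) \<Rightarrow> complex \<Rightarrow> complex" where
  "hecke_pp k t p 0 f = f"
| "hecke_pp k t p (Suc 0) f = hecke_p k t p f"
| "hecke_pp k t p (Suc (Suc n)) f = (\<lambda>z. hecke_p k t p (hecke_pp k t p (Suc n) f) z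
      - complex_of_real (real p powr (of_int k - 1)) * hecke_pp k t p n f z)"

end

theory Submission
  imports Defs
begin

lemma mdet_mmul: "mdet (mmul g h) = mdet g * mdet h"
  by (cases g; cases h) (auto simp: mdet_def mmul_def algebra_simps)

lemma jf_nonzero:
  fixes a b c d :: real
  assumes "a*d - b*c > 0" "Im z > 0"
  shows "of_real c * z + of_real d \<noteq> 0"
proof
  assume h: "of_real c * z + of_real d = 0"
  hence "Im (of_real c * z + of_real d) = 0" by simp
  hence "c * Im z = 0" by simp
  hence c: "c = 0" using assms(2) by simp
  with h have "d = 0" by simp
  with c assms(1) show False by simp
qed

lemma Im_mob:
  fixes a b c d :: real
  shows "Im ((of_real a * z + of_real b) / (of_real c * z + of_real d)) =
         (a*d - b*c) * Im z / ((c * Re z + d)^2 + (c * Im z)^2)"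
  by (simp add: Im_divide algebra_simps power2_eq_square)

lemma Im_mob_pos:
  fixes a b c d :: real
  assumes "a*d - b*c > 0" "Im z > 0"
  shows "Im ((of_real a * z + of_real b) / (of_real c * z + of_real d)) > 0"
proof -
  have "c * Im z \<noteq> 0 \<or> c * Re z + d \<noteq> 0"
    using jf_nonzero[OF assms] by (auto simp: complex_eq_iff)
  hence "(c * Re z + d)^2 + (c * Im z)^2 > 0"
    by (auto simp: add_pos_nonneg add_nonneg_pos)
  thus ?thesis using assms by (simp add: Im_mob)
qed

lemma slash_comp:
  assumes "mdet g > 0" "mdet h > 0" "Im z > 0"
  shows "slash k h (slash k g f) z = slash k (mmul g h) f z"
proof -
  obtain a b c d where g: "g = (a,b,c,d)" by (cases g) auto
  obtain a' b' c' d' where h: "h = (a',b',c',d')" by (cases h) auto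
  have dg: "a*d - b*c > 0" and dh: "a'*d' - b'*c' > 0" using assms by (auto simp: g h mdet_def)
  define w where "w = (of_real a' * z + of_real b') / (of_real c' * z + of_real d')"
  have j1: "of_real c' * z + of_real d' \<noteq> 0" by (rule jf_nonzero[OF dh assms(3)])
  have wpos: "Im w > 0" unfolding w_def by (rule Im_mob_pos[OF dh assms(3)])
  have j2: "of_real c * w + of_real d \<noteq> 0" by (rule jf_nonzero[OF dg wpos])
  have e1: "(of_real c * w + of_real d) * (of_real c' * z + of_real d') =
      of_real (c * a' + d * c') * z + of_real (c * b' + d * d')"
    using j1 by (simp add: w_def field_simps)
  have e2: "(of_real a * w + of_real b) / (of_real c * w + of_real d) =
      (of_real (a * a' + b * c') * z + of_real (a * b' + b * d')) /
      (of_real (c * a' + d * c') * z + of_real (c * b' + d * d'))"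
  proof -
    have "(of_real a * w + of_real b) * (of_real c' * z + of_real d') =
      of_real (a * a' + b * c') * z + of_real (a * b' + b * d')"
      using j1 by (simp add: w_def field_simps)
    thus ?thesis using e1 j1 j2
      by (metis mult_divide_mult_cancel_right)
  qed
  have pw: "complex_of_real ((mdet g * mdet h) powr (of_int k / 2)) =
      complex_of_real (mdet h powr (of_int k / 2)) * complex_of_real (mdet g powr (of_int k / 2))"
    using assms by (simp add: powr_mult)
  have pi: "(of_real c * w + of_real d) powi (- k) * (of_real c' * z + of_real d') powi (- k) =
     (of_real (c * a' + d * c') * z + of_real (c * b' + d * d')) powi (-k)"
    by (simp only: e1[symmetric] power_int_mult_distrib)
  have L: "slash k h (slash k g f) z = complex_of_real (mdet h powr (of_int k / 2)) *
      (of_real c' * z + of_real d') powi (-k) * (complex_of_real (mdet g powr (of_int k / 2)) *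
      (of_real c * w + of_real d) powi (-k) * f ((of_real a * w + of_real b)/(of_real c*w + of_real d)))"
    unfolding slash_def w_def by (simp only: g h prod.case)
  have R: "slash k (mmul g h) f z = complex_of_real ((mdet g * mdet h) powr (of_int k / 2)) *
      (of_real (c * a' + d * c') * z + of_real (c * b' + d * d')) powi (-k) *
      f ((of_real (a * a' + b * c') * z + of_real (a * b' + b * d')) /
      (of_real (c * a' + d * c') * z + of_real (c * b' + d * d')))"
    unfolding slash_def mdet_mmul by (simp only: g h mmul_def prod.case)
  show ?thesis unfolding L R pw pi[symmetric] e2 by (simp only: mult_ac)
qed

lemma slash_cong:
  assumes "mdet g > 0" "Im z > 0" "\<And>w. Im w > 0 \<Longrightarrow> f1 w = f2 w"
  shows "slash k g f1 z = slash k g f2 z"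
proof -
  obtain a b c d where g: "g = (a,b,c,d)" by (cases g) auto
  have "Im ((of_real a * z + of_real b) / (of_real c * z + of_real d)) > 0"
    using assms by (intro Im_mob_pos) (auto simp: g mdet_def)
  thus ?thesis using assms(3) by (simp add: slash_def g)
qed

lemma slash_cmult: "slash k g (\<lambda>w. C * f w) z = C * slash k g f z"
  by (cases g) (simp add: slash_def)

lemma slash_diff: "slash k g (\<lambda>w. f1 w - f2 w) z = slash k g f1 z - slash k g f2 z"
  by (cases g) (simp add: slash_def algebra_simps)

lemma slash_add: "slash k g (\<lambda>w. f1 w + f2 w) z = slash k g f1 z + slash k g f2 z"
  by (cases g) (simp add: slash_def algebra_simps)

lemma slash_sum: "slash k g (\<lambda>w. \<Sum>i\<in>I. F i w) z = (\<Sum>i\<in>I. slash k g (F i) z)"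
  by (cases g) (simp add: slash_def sum_distrib_left sum_distrib_right)

lemma slash_id: "slash k (1,0,0,1) f z = f z"
  by (simp add: slash_def mdet_def)

lemma slash_holo:
  assumes "f holomorphic_on upper_half_plane" "mdet g > 0"
  shows "slash k g f holomorphic_on upper_half_plane"
proof -
  obtain a b c d where g: "g = (a,b,c,d)" by (cases g) auto
  have dg: "a*d - b*c > 0" using assms by (simp add: g mdet_def)
  have nz: "\<forall>z\<in>upper_half_plane. of_real c * z + of_real d \<noteq> 0"
    using jf_nonzero[OF dg] by (auto simp: upper_half_plane_def)
  have m: "(\<lambda>z. (of_real a * z + of_real b) / (of_real c * z + of_real d)) holomorphic_on upper_half_plane"
    using nz by (intro holomorphic_intros) auto
  have im: "(\<lambda>z. (of_real a * z + of_real b) / (of_real c * z + of_real d)) ` upper_half_plane \<subseteq> upper_half_plane"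
    using Im_mob_pos[OF dg] by (auto simp: upper_half_plane_def)
  have "(f \<circ> (\<lambda>z. (of_real a * z + of_real b) / (of_real c * z + of_real d))) holomorphic_on upper_half_plane"
    by (rule holomorphic_on_compose_gen[OF m assms(1) im])
  hence fm: "(\<lambda>z. f ((of_real a * z + of_real b) / (of_real c * z + of_real d))) holomorphic_on upper_half_plane"
    by (simp add: o_def)
  have "(\<lambda>z. complex_of_real (mdet g powr (of_int k / 2)) * (of_real c * z + of_real d) powi (-k) *
      f ((of_real a * z + of_real b) / (of_real c * z + of_real d))) holomorphic_on upper_half_plane"
    by (intro holomorphic_intros fm) (use nz in auto)
  thus ?thesis unfolding slash_def g by simp
qed



abbreviation "I2 \<equiv> (1::real, 0::real, 0::real, 1::real)"

lemma mmul_minv: "mdet g = 1 \<Longrightarrow> mmul g (minv g) = I2"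
  by (cases g) (auto simp: mmul_def minv_def mdet_def field_simps)

lemma minv_mmul: "mdet g = 1 \<Longrightarrow> mmul (minv g) g = I2"
  by (cases g) (auto simp: mmul_def minv_def mdet_def field_simps)

lemma mdet_minv: "mdet g = 1 \<Longrightarrow> mdet (minv g) = 1"
  by (cases g) (auto simp: minv_def mdet_def field_simps)

lemma mdet_W: "N > 0 \<Longrightarrow> mdet (fricke_W N) = 1"
  by (simp add: mdet_def fricke_W_def)

lemma Gamma0MN_det: "g \<in> Gamma0MN M L \<Longrightarrow> mdet g = 1"
proof -
  assume "g \<in> Gamma0MN M L"
  then obtain a b c d :: int where "g = (of_int a, of_int b, of_int c, of_int d)" "a*d - b*c = 1"
    by (auto simp: Gamma0MN_def)
  thus ?thesis by (simp add: mdet_def) (metis of_int_1 of_int_diff of_int_mult)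
qed

lemma fricke_det: "g \<in> fricke_group N \<Longrightarrow> N > 0 \<Longrightarrow> mdet g = 1"
  by (induction rule: fricke_group.induct) (auto simp: Gamma0MN_det mdet_W mdet_mmul mdet_minv)

lemma gamma0_in:
  fixes a b c d :: int
  assumes "a*d - b*c = 1" "int N dvd c"
  shows "(of_int a, of_int b, of_int c, of_int d) \<in> fricke_group N"
  using assms by (intro fricke_group.gamma0) (auto simp: Gamma0MN_def)

lemma Gamma0MN_sub: "Gamma0MN (N*t) t \<subseteq> fricke_group N"
proof
  fix g assume "g \<in> Gamma0MN (N*t) t"
  then obtain a b c d :: int where "g = (of_int a, of_int b, of_int c, of_int d)" "a*d - b*c = 1"
     "int (N*t) dvd c" by (auto simp: Gamma0MN_def)
  moreover have "int N dvd c" using \<open>int (N*t) dvd c\<close> by (metis dvd_mult_left of_nat_mult)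
  ultimately show "g \<in> fricke_group N" using gamma0_in by simp
qed

lemma I2_in: "I2 \<in> fricke_group N"
  using gamma0_in[of 1 1 0 0 N] by simp

lemma mult_unit:
  assumes "multiplier_system G \<mu>" "I2 \<in> G"
  shows "\<mu> I2 = 1"
proof -
  have m: "mmul I2 I2 = I2" by (simp add: mmul_def)
  have "\<mu> I2 = \<mu> I2 * \<mu> I2" using assms m unfolding multiplier_system_def by metis
  moreover have "\<mu> I2 \<noteq> 0" using assms by (auto simp: multiplier_system_def)
  ultimately show ?thesis by (metis mult_cancel_right1 mult.commute)
qed

definition law :: "int \<Rightarrow> (mat2 \<Rightarrow> complex) \<Rightarrow> (complex \<Rightarrow> complex) \<Rightarrow> mat2 \<Rightarrow> bool" where
  "law k \<mu> F g \<longleftrightarrow> (\<forall>z. Im z > 0 \<longrightarrow> slash k g F z = \<mu> g * F z)"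

lemma law_mult:
  assumes ms: "multiplier_system (fricke_group N) \<mu>" and N: "N > 0"
    and g: "g \<in> fricke_group N" and h: "h \<in> fricke_group N"
    and lg: "law k \<mu> F g" and lh: "law k \<mu> F h"
  shows "law k \<mu> F (mmul g h)"
  unfolding law_def
proof (intro allI impI)
  fix z :: complex assume z: "Im z > 0"
  have dg: "mdet g > 0" and dh: "mdet h > 0" using fricke_det[OF g N] fricke_det[OF h N] by auto
  have "slash k (mmul g h) F z = slash k h (slash k g F) z" using slash_comp[OF dg dh z] by simp
  also have "\<dots> = slash k h (\<lambda>w. \<mu> g * F w) z"
    using lg by (intro slash_cong[OF dh z]) (auto simp: law_def)
  also have "\<dots> = \<mu> g * (\<mu> h * F z)" using lh z by (simp add: slash_cmult law_def)
  also have "\<dots> = \<mu> (mmul g h) * F z" using ms g h by (simp add: multiplier_system_def)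
  finally show "slash k (mmul g h) F z = \<mu> (mmul g h) * F z" .
qed

lemma law_inv:
  assumes ms: "multiplier_system (fricke_group N) \<mu>" and N: "N > 0"
    and g: "g \<in> fricke_group N" and lg: "law k \<mu> F g"
  shows "law k \<mu> F (minv g)"
  unfolding law_def
proof (intro allI impI)
  fix z :: complex assume z: "Im z > 0"
  have g1: "mdet g = 1" using fricke_det[OF g N] .
  have gi: "minv g \<in> fricke_group N" using g by (rule fricke_group.inv)
  have dg: "mdet g > 0" and dh: "mdet (minv g) > 0" using g1 mdet_minv[OF g1] by auto
  have u: "\<mu> g * \<mu> (minv g) = 1"
    using ms g gi mult_unit[OF ms I2_in] mmul_minv[OF g1]
    by (metis multiplier_system_def)
  have "\<mu> g * slash k (minv g) F z = slash k (minv g) (\<lambda>w. \<mu> g * F w) z" by (simp add: slash_cmult)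
  also have "\<dots> = slash k (minv g) (slash k g F) z"
    using lg by (intro slash_cong[OF dh z]) (auto simp: law_def)
  also have "\<dots> = F z" using slash_comp[OF dg dh z] mmul_minv[OF g1] by (simp add: slash_id)
  finally have "\<mu> g * slash k (minv g) F z = F z" .
  hence "\<mu> (minv g) * (\<mu> g * slash k (minv g) F z) = \<mu> (minv g) * F z" by simp
  thus "slash k (minv g) F z = \<mu> (minv g) * F z" using u by (simp add: mult.assoc[symmetric] mult.commute)
qed



lemma round_exists:
  fixes x y :: int
  assumes "y \<noteq> 0"
  shows "\<exists>m. 2 * \<bar>x + y * m\<bar> \<le> \<bar>y\<bar>"
proof -
  define r where "r = x mod \<bar>y\<bar>"
  have r0: "0 \<le> r" "r < \<bar>y\<bar>" using assms by (auto simp: r_def)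
  obtain q where q: "x = \<bar>y\<bar> * q + r" unfolding r_def by (metis div_mult_mod_eq mult.commute)
  obtain e where e: "\<bar>y\<bar> = y * e" "e = 1 \<or> e = -1"
  proof (cases "y \<ge> 0")
    case True thus ?thesis using that[of 1] by simp
  next
    case False thus ?thesis using that[of "-1"] by simp
  qed
  show ?thesis
  proof (cases "2 * r \<le> \<bar>y\<bar>")
    case True
    have "x + y * (- (e*q)) = r" using q e by (simp add: algebra_simps)
    thus ?thesis using True r0 by (intro exI[of _ "- (e*q)"]) simp
  next
    case False
    have "x + y * (- (e*q) - e) = r - \<bar>y\<bar>" using q e by (simp add: algebra_simps)
    thus ?thesis using False r0 by (intro exI[of _ "- (e*q) - e"]) simp
  qed
qed

lemma descent_step:
  fixes a b c d :: int
  assumes "N \<in> {1,2,3,4}" "a*d - b*c = 1" "int N dvd c" "c \<noteq> 0"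
  shows "\<exists>m s. int N dvd s \<and> \<bar>c + (d + c*m) * s\<bar> < \<bar>c\<bar>"
proof -
  obtain m where m: "2 * \<bar>d + c * m\<bar> \<le> \<bar>c\<bar>" using round_exists[OF assms(4)] by blast
  define d' where "d' = d + c*m"
  define b' where "b' = b + a*m"
  have det: "a*d' - b'*c = 1" using assms(2) by (simp add: d'_def b'_def algebra_simps)
  show ?thesis
  proof (cases "d' = 0")
    case True
    hence "b' * c = -1" using det by simp
    hence c1: "\<bar>c\<bar> = 1" using zmult_eq_1_iff[of "-b'" c] by auto
    have "int N dvd \<bar>c\<bar>" using assms(3) by simp
    hence "int N dvd 1" using c1 by simp
    hence "N = 1" by simp
    have "c + (d + c*(m+1)) * (-1) = 0" using True by (simp add: d'_def algebra_simps)
    thus ?thesis using \<open>N = 1\<close> assms(4) by (intro exI[of _ "m+1"] exI[of _ "-1"]) auto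
  next
    case False
    have "int N * d' \<noteq> 0" using False assms(1) by auto
    then obtain n where n: "2 * \<bar>c + (int N * d') * n\<bar> \<le> \<bar>int N * d'\<bar>" using round_exists by blast
    have lt: "\<bar>c + d' * (int N * n)\<bar> < \<bar>c\<bar>"
    proof -
      have e1: "c + int N * d' * n = c + d' * (int N * n)" by (simp add: algebra_simps)
      have n2: "2 * \<bar>c + d' * (int N * n)\<bar> \<le> int N * \<bar>d'\<bar>" using n e1 by (simp add: abs_mult)
      have m2: "2 * \<bar>d'\<bar> \<le> \<bar>c\<bar>" using m by (simp add: d'_def)
      have "int N * (2 * \<bar>d'\<bar>) \<le> int N * \<bar>c\<bar>" using m2 by (intro mult_left_mono) auto
      hence A: "4 * \<bar>c + d' * (int N * n)\<bar> \<le> int N * \<bar>c\<bar>" using n2 by linarith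
      show ?thesis
      proof (cases "N = 4")
        case False
        hence "int N \<le> 3" using assms(1) by auto
        hence "int N * \<bar>c\<bar> < 4 * \<bar>c\<bar>" using assms(4) by simp
        hence "4 * \<bar>c + d' * (int N * n)\<bar> < 4 * \<bar>c\<bar>" using A by (rule le_less_trans[rotated])
        thus ?thesis by simp
      next
        case True
        have "4 * \<bar>c + d' * (int N * n)\<bar> \<noteq> 4 * \<bar>c\<bar>"
        proof
          assume eq: "4 * \<bar>c + d' * (int N * n)\<bar> = 4 * \<bar>c\<bar>"
          have "2 * \<bar>d'\<bar> = \<bar>c\<bar>" using eq n2 m2 True by simp
          hence "c = 2*d' \<or> c = -2*d'" by (auto simp: abs_if split: if_splits)
          hence "d' * (a - 2*b') = 1 \<or> d' * (a + 2*b') = 1" using det by (auto simp: algebra_simps)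
          hence "\<bar>d'\<bar> = 1" using zmult_eq_1_iff by auto
          hence "\<bar>c\<bar> = 2" using \<open>2 * \<bar>d'\<bar> = \<bar>c\<bar>\<close> by simp
          moreover have "4 dvd \<bar>c\<bar>" using assms(3) True by simp
          ultimately show False by simp
        qed
        moreover have "4 * \<bar>c + d' * (int N * n)\<bar> \<le> 4 * \<bar>c\<bar>" using A True by simp
        ultimately have "4 * \<bar>c + d' * (int N * n)\<bar> < 4 * \<bar>c\<bar>" by simp
        thus ?thesis by simp
      qed
    qed
    thus ?thesis by (intro exI[of _ m] exI[of _ "int N * n"]) (auto simp: d'_def)
  qed
qed

lemma T_in: "(1, of_int m, 0, 1) \<in> fricke_group N"
  using gamma0_in[of 1 1 m 0 N] by simp

lemma U_in: "int N dvd s \<Longrightarrow> (1, 0, of_int s, 1) \<in> fricke_group N"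
  using gamma0_in[of 1 1 0 s N] by simp

lemma W_sq: "N > 0 \<Longrightarrow> mmul (fricke_W N) (fricke_W N) = (-1, 0, 0, -1)"
  by (simp add: mmul_def fricke_W_def)

lemma minv_W: "N > 0 \<Longrightarrow> minv (fricke_W N) = (0, 1 / sqrt (real N), - sqrt (real N), 0)"
  by (simp add: minv_def fricke_W_def mdet_def)

lemma W_conj: "N > 0 \<Longrightarrow> mmul (mmul (fricke_W N) (1, x, 0, 1)) (minv (fricke_W N)) = (1, 0, - real N * x, 1)"
  unfolding minv_W by (simp add: mmul_def fricke_W_def field_simps)

lemma law_I2: "multiplier_system (fricke_group N) \<nu> \<Longrightarrow> law k \<nu> F I2"
  using mult_unit[OF _ I2_in] by (simp add: law_def slash_id)

lemma law_all:
  assumes N: "N \<in> {1,2,3,4}" and ms: "multiplier_system (fricke_group N) \<nu>"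
    and lT: "law k \<nu> F (1,1,0,1)" and lW: "law k \<nu> F (fricke_W N)"
    and g: "g \<in> fricke_group N"
  shows "law k \<nu> F g"
proof -
  have N0: "N > 0" using N by auto
  have Win: "fricke_W N \<in> fricke_group N" by (rule fricke_group.fricke)
  have lM: "law k \<nu> F (mmul g h)" if "g \<in> fricke_group N" "h \<in> fricke_group N" "law k \<nu> F g" "law k \<nu> F h" for g h
    using law_mult[OF ms N0 that] .
  have lI: "law k \<nu> F (minv g)" if "g \<in> fricke_group N" "law k \<nu> F g" for g
    using law_inv[OF ms N0 that] .
  have lTn: "law k \<nu> F (1, real n, 0, 1)" for n :: nat
  proof (induction n)
    case 0 thus ?case using law_I2[OF ms] by simp
  next
    case (Suc n)
    have "mmul (1, real n, 0, 1) (1,1,0,1) = (1, real (Suc n), 0, 1)" by (simp add: mmul_def)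
    moreover have "(1, real n, 0, 1) \<in> fricke_group N" using T_in[of "int n" N] by simp
    moreover have "(1, 1, 0, 1) \<in> fricke_group N" using T_in[of 1 N] by simp
    ultimately show ?case using lM[of "(1, real n, 0, 1)" "(1,1,0,1)", OF _ _ Suc lT] by simp
  qed
  have lTi: "law k \<nu> F (1, of_int m, 0, 1)" for m :: int
  proof (cases "m \<ge> 0")
    case True
    hence "m = int (nat m)" by simp
    thus ?thesis using lTn[of "nat m"] by (metis of_int_of_nat_eq)
  next
    case False
    define n where "n = nat (-m)"
    have n: "m = - int n" using False by (simp add: n_def)
    have "minv (1, real n, 0, 1) = (1, of_int m, 0, 1)" by (simp add: minv_def mdet_def n)
    moreover have "(1, real n, 0, 1) \<in> fricke_group N" using T_in[of "int n" N] by simp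
    ultimately show ?thesis using lI[of "(1, real n, 0, 1)", OF _ lTn] by simp
  qed
  have lmI: "law k \<nu> F (-1, 0, 0, -1)" using lM[OF Win Win lW lW] W_sq[OF N0] by simp
  have mIin: "(-1::real, 0::real, 0::real, -1::real) \<in> fricke_group N"
    using fricke_group.mult[OF Win Win] W_sq[OF N0] by simp
  have lU: "law k \<nu> F (1, 0, of_int s, 1)" if sdv: "int N dvd s" for s
  proof -
    obtain n where n: "s = int N * n" using sdv by (auto simp: dvd_def)
    have "mmul (mmul (fricke_W N) (1, of_int (-n), 0, 1)) (minv (fricke_W N)) = (1, 0, of_int s, 1)"
      using W_conj[OF N0] by (simp add: n)
    moreover have "mmul (fricke_W N) (1, of_int (-n), 0, 1) \<in> fricke_group N"
      using Win T_in by (rule fricke_group.mult)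
    moreover have "law k \<nu> F (mmul (fricke_W N) (1, of_int (-n), 0, 1))"
      using lM[OF Win T_in lW lTi] .
    moreover have "minv (fricke_W N) \<in> fricke_group N" using Win by (rule fricke_group.inv)
    moreover have "law k \<nu> F (minv (fricke_W N))" using lI[OF Win lW] .
    ultimately show ?thesis using lM[of "mmul (fricke_W N) (1, of_int (-n), 0, 1)" "minv (fricke_W N)"] by simp
  qed
  have desc: "\<forall>a b c d. nat \<bar>c\<bar> = n \<longrightarrow> a*d - b*c = 1 \<longrightarrow> int N dvd c \<longrightarrow>
      law k \<nu> F (of_int a, of_int b, of_int c, of_int d)" for n
  proof (induction n rule: less_induct)
    case (less n)
    show ?case
    proof (intro allI impI)
      fix a b c d :: int
      assume cn: "nat \<bar>c\<bar> = n" and det: "a*d - b*c = 1" and Nc: "int N dvd c"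
      show "law k \<nu> F (of_int a, of_int b, of_int c, of_int d)"
      proof (cases "c = 0")
        case True
        hence "a * d = 1" using det by simp
        hence "(a = 1 \<and> d = 1) \<or> (a = -1 \<and> d = -1)" using zmult_eq_1_iff by auto
        thus ?thesis
        proof
          assume "a = 1 \<and> d = 1" thus ?thesis using lTi[of b] True by simp
        next
          assume ad: "a = -1 \<and> d = -1"
          have "mmul (-1, 0, 0, -1) (1, of_int (-b), 0, 1) = (of_int a, of_int b, of_int c, of_int d)"
            using ad True by (simp add: mmul_def)
          thus ?thesis using lM[OF mIin T_in lmI lTi[of "-b"]] by simp
        qed
      next
        case False
        obtain m s where ms': "int N dvd s" "\<bar>c + (d + c*m) * s\<bar> < \<bar>c\<bar>"
          using descent_step[OF N det Nc False] by blast
        define b' where "b' = b + a*m"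
        define d' where "d' = d + c*m"
        define a'' where "a'' = a + b' * s"
        define c'' where "c'' = c + d' * s"
        have det'': "a'' * d' - b' * c'' = 1" using det
          by (simp add: a''_def c''_def b'_def d'_def algebra_simps)
        have Nc'': "int N dvd c''" using Nc ms'(1) by (simp add: c''_def)
        have lt: "nat \<bar>c''\<bar> < n" using ms'(2) cn by (simp add: c''_def d'_def)
        have l'': "law k \<nu> F (of_int a'', of_int b', of_int c'', of_int d')"
          using less[OF lt] det'' Nc'' by blast
        have in'': "(of_int a'', of_int b', of_int c'', of_int d') \<in> fricke_group N"
          using gamma0_in[OF det'' Nc''] .
        have eq: "mmul (mmul (of_int a'', of_int b', of_int c'', of_int d') (1, 0, of_int (-s), 1))
            (1, of_int (-m), 0, 1) = (of_int a, of_int b, of_int c, of_int d)"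
          by (simp add: mmul_def a''_def b'_def c''_def d'_def algebra_simps)
        have sN: "int N dvd - s" using ms'(1) by simp
        have "law k \<nu> F (mmul (of_int a'', of_int b', of_int c'', of_int d') (1, 0, of_int (-s), 1))"
          using lM[OF in'' U_in[OF sN] l'' lU[OF sN]] .
        moreover have "mmul (of_int a'', of_int b', of_int c'', of_int d') (1, 0, of_int (-s), 1) \<in> fricke_group N"
          using in'' U_in[OF sN] by (rule fricke_group.mult)
        ultimately have "law k \<nu> F (mmul (mmul (of_int a'', of_int b', of_int c'', of_int d') (1, 0, of_int (-s), 1))
            (1, of_int (-m), 0, 1))" using lM[OF _ T_in _ lTi[of "-m"]] by blast
        thus ?thesis unfolding eq .
      qed
    qed
  qed
  show ?thesis using g
  proof (induction rule: fricke_group.induct)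
    case (gamma0 g)
    then obtain a b c d :: int where "g = (of_int a, of_int b, of_int c, of_int d)" "a*d - b*c = 1"
      "int N dvd c" by (auto simp: Gamma0MN_def)
    thus ?case using desc by blast
  next
    case fricke thus ?case using lW .
  next
    case (mult g h) thus ?case using lM by blast
  next
    case (inv g) thus ?case using lI by blast
  qed
qed



lemma sum_perm:
  assumes "finite A" "h ` A \<subseteq> A" "inj_on h A"
  shows "(\<Sum>j\<in>A. g (h j)) = (\<Sum>j\<in>A. g j)"
proof -
  have "h ` A = A" using endo_inj_surj[OF assms] .
  hence "(\<Sum>j\<in>A. g j) = (\<Sum>j\<in>h ` A. g j)" by simp
  also have "\<dots> = (\<Sum>j\<in>A. g (h j))" using sum.reindex[OF assms(3)] by simp
  finally show ?thesis by simp
qed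

locale hk =
  fixes N t p :: nat and k :: int and \<mu> :: "mat2 \<Rightarrow> complex" and f :: "complex \<Rightarrow> complex"
  assumes N: "N \<in> {1,2,3,4}" and t: "t > 0"
    and ms: "multiplier_system (fricke_group N) \<mu>"
    and root: "\<forall>g\<in>fricke_group N. \<mu> g ^ (2 * t) = 1"
    and triv: "\<forall>g\<in>Gamma0MN (N * t) t. \<mu> g = 1"
    and pp: "prime p" and pN: "\<not> p dvd N" and pc: "[p ^ 2 = 1] (mod 2 * t)"
    and fhol: "f holomorphic_on upper_half_plane"
    and flaw: "\<forall>g\<in>fricke_group N. law k \<mu> f g"
begin

lemma N0: "N > 0" using N by auto
lemma p1: "p > 1" using pp prime_gt_1_nat by blast
lemma p0: "p > 0" using p1 by simp

lemma tdvd: "2 * t dvd p^2 - 1" using cong_to_1_nat[OF pc] .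

lemma todd: "odd p"
proof
  assume "even p"
  hence "even (p^2)" by simp
  moreover have "even (p^2 - 1)" using dvd_mult_left[OF tdvd] .
  moreover have "p^2 \<ge> 1" using p0 by simp
  moreover have "\<forall>x::nat. even x \<longrightarrow> even (x-1) \<longrightarrow> x \<ge> 1 \<longrightarrow> False" by presburger
  ultimately show False by blast
qed

definition r where "r = (p^2 - 1) div t"
lemma tr: "t * r = p^2 - 1"
  unfolding r_def by (rule dvd_mult_div_cancel[OF dvd_mult_right[OF tdvd]])
lemma tr_int: "int t * int r = int p ^ 2 - 1"
proof -
  have "p^2 \<ge> 1" using p0 by simp
  thus ?thesis using tr by (metis of_nat_1 of_nat_diff of_nat_mult of_nat_power)
qed

lemma p_not_t: "\<not> p dvd t"
proof
  assume "p dvd t"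
  hence "p dvd p^2 - 1" using dvd_mult_right[OF tdvd] by (rule dvd_trans)
  moreover have "p dvd p^2" by simp
  moreover have "p^2 \<ge> 1" using p0 by simp
  ultimately have "p dvd p^2 - (p^2 - 1)" using dvd_diff_nat by blast
  hence "p dvd 1" using \<open>p^2 \<ge> 1\<close> by simp
  thus False using p1 by simp
qed

lemma fin: "g \<in> fricke_group N \<Longrightarrow> Im z > 0 \<Longrightarrow> slash k g f z = \<mu> g * f z"
  using flaw by (auto simp: law_def)

abbreviation "TT \<equiv> (1::real, 1::real, 0::real, 1::real)"

lemma fT1: "Im w > 0 \<Longrightarrow> f (w + 1) = \<mu> TT * f w"
  using fin[of TT w] T_in[of 1 N] by (simp add: slash_def mdet_def)

lemma fTn: "Im w > 0 \<Longrightarrow> f (w + of_nat n) = \<mu> TT ^ n * f w"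
proof (induction n)
  case 0 thus ?case by simp
next
  case (Suc n)
  have "f (w + of_nat (Suc n)) = f ((w + of_nat n) + 1)" by (simp add: algebra_simps)
  also have "\<dots> = \<mu> TT * f (w + of_nat n)" using Suc by (intro fT1) simp
  finally show ?case using Suc by simp
qed

lemma ft: "Im w > 0 \<Longrightarrow> f (w + of_int (int t * m)) = f w"
proof -
  assume w: "Im w > 0"
  have g: "(1, of_int (int t * m), 0, 1) \<in> Gamma0MN (N * t) t"
    unfolding Gamma0MN_def by (rule CollectI, rule exI[of _ 1], rule exI[of _ "int t * m"],
       rule exI[of _ 0], rule exI[of _ 1]) simp
  hence "\<mu> (1, of_int (int t * m), 0, 1) = 1" using triv by blast
  moreover have "(1, of_int (int t * m), 0, 1) \<in> fricke_group N" using g Gamma0MN_sub by blast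
  ultimately show ?thesis using fin[of "(1, of_int (int t * m), 0, 1)" w] w by (simp add: slash_def mdet_def)
qed

definition "CC = complex_of_real (real p powr (of_int k / 2 - 1))"
definition "AA = complex_of_real (real p powr (of_int k / 2)) * (of_nat p) powi (- k)"
definition "BB = complex_of_real (real p powr (of_int k / 2))"

lemma slash_alpha: "slash k (1, real t * real j, 0, real p) f z = AA * f ((z + of_nat (t * j)) / of_nat p)"
  by (simp add: slash_def mdet_def AA_def)

lemma slash_inf: "slash k (real p, 0, 0, 1) f z = BB * f (of_nat p * z)"
  by (simp add: slash_def mdet_def BB_def)

lemma F_expr: "hecke_p k t p f z = CC * ((\<Sum>j=0..<p. AA * f ((z + of_nat (t * j)) / of_nat p)) + BB * f (of_nat p * z))"
  by (simp add: hecke_p_def CC_def slash_alpha slash_inf)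

lemma F_T:
  assumes z: "Im z > 0"
  shows "hecke_p k t p f (z + 1) = \<mu> TT ^ p * hecke_p k t p f z"
proof -
  define c where "c = (p - 1) * r"
  define h where "h j = (j + c) mod p" for j
  define q where "q j = (j + c) div p" for j
  have key: "f ((z + 1 + of_nat (t * j)) / of_nat p) = \<mu> TT ^ p * f ((z + of_nat (t * h j)) / of_nat p)" for j
  proof -
    have hq: "int (h j) + int p * int (q j) = int j + int (p - 1) * int r"
      unfolding h_def q_def c_def by (metis of_nat_add of_nat_mult mod_div_mult_eq add.commute mult.commute)
    have pm1: "int (p - 1) = int p - 1" using p0 by simp
    have ie: "1 + int t * int j = int t * int (h j) + int p * int p + int p * (int t * (int (q j) - int r))"
    proof -
      have "int t * int (h j) + int p * int p + int p * (int t * (int (q j) - int r)) =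
          int t * (int (h j) + int p * int (q j)) + int p * int p - int p * (int t * int r)"
        by (simp add: algebra_simps)
      also have "\<dots> = int t * int j + int t * int r * (int p - 1) + int p * int p - int p * (int t * int r)"
        unfolding hq pm1 by (simp add: algebra_simps)
      also have "\<dots> = 1 + int t * int j" unfolding tr_int by (simp add: algebra_simps power2_eq_square)
      finally show ?thesis by simp
    qed
    have ce: "(z + 1 + of_nat (t * j)) / of_nat p = ((z + of_nat (t * h j)) / of_nat p + of_nat p) + of_int (int t * (int (q j) - int r))"
    proof -
      have "complex_of_int (1 + int t * int j) = of_int (int t * int (h j) + int p * int p + int p * (int t * (int (q j) - int r)))"
        using ie by simp
      hence e: "1 + of_nat (t * j) = (of_nat (t * h j) + of_nat p * of_nat p + of_nat p * of_int (int t * (int (q j) - int r)) :: complex)"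
        by simp
      have gen: "(z + u) / P = ((z + v) / P + P) + w" if "u = v + P * P + P * w" "P \<noteq> 0" for u v w P :: complex
        using that by (simp add: field_simps)
      have "(z + (1 + of_nat (t * j))) / of_nat p = ((z + of_nat (t * h j)) / of_nat p + of_nat p) + of_int (int t * (int (q j) - int r))"
        by (rule gen) (use e p0 in auto)
      thus ?thesis by (simp add: add.assoc)
    qed
    have im: "Im ((z + of_nat (t * h j)) / of_nat p) > 0" using z p0 by simp
    have "f ((z + 1 + of_nat (t * j)) / of_nat p) = f ((z + of_nat (t * h j)) / of_nat p + of_nat p)"
      unfolding ce using im by (intro ft) simp
    also have "\<dots> = \<mu> TT ^ p * f ((z + of_nat (t * h j)) / of_nat p)" using im by (rule fTn)
    finally show ?thesis .
  qed
  have perm: "(\<Sum>j=0..<p. AA * f ((z + of_nat (t * h j)) / of_nat p)) = (\<Sum>j=0..<p. AA * f ((z + of_nat (t * j)) / of_nat p))"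
  proof (rule sum_perm[where g = "\<lambda>j. AA * f ((z + of_nat (t * j)) / of_nat p)"])
    show "h ` {0..<p} \<subseteq> {0..<p}" using p0 by (auto simp: h_def)
    show "inj_on h {0..<p}"
    proof
      fix x y assume xy: "x \<in> {0..<p}" "y \<in> {0..<p}" "h x = h y"
      hence "[x + c = y + c] (mod p)" by (simp add: h_def cong_def)
      hence "[x = y] (mod p)" by (simp add: cong_add_rcancel_nat)
      thus "x = y" using xy cong_less_modulus_unique_nat by auto
    qed
  qed simp
  have B: "f (of_nat p * (z + 1)) = \<mu> TT ^ p * f (of_nat p * z)"
  proof -
    have "f (of_nat p * (z + 1)) = f (of_nat p * z + of_nat p)" by (simp add: algebra_simps)
    also have "\<dots> = \<mu> TT ^ p * f (of_nat p * z)" using z p0 by (intro fTn) simp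
    finally show ?thesis .
  qed
  have "hecke_p k t p f (z + 1) = CC * ((\<Sum>j=0..<p. AA * (\<mu> TT ^ p * f ((z + of_nat (t * h j)) / of_nat p))) + BB * (\<mu> TT ^ p * f (of_nat p * z)))"
    unfolding F_expr key B by simp
  also have "\<dots> = \<mu> TT ^ p * (CC * ((\<Sum>j=0..<p. AA * f ((z + of_nat (t * h j)) / of_nat p)) + BB * f (of_nat p * z)))"
    by (simp add: sum_distrib_left algebra_simps)
  also have "\<dots> = \<mu> TT ^ p * hecke_p k t p f z" unfolding perm F_expr ..
  finally show ?thesis .
qed

abbreviation "WW \<equiv> fricke_W N"
abbreviation "alpha j \<equiv> (1::real, real t * real j, 0::real, real p)"
abbreviation "alinf \<equiv> (real p, 0::real, 0::real, 1::real)"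

lemma Win: "WW \<in> fricke_group N" by (rule fricke_group.fricke)

lemma Wstep:
  assumes b: "mdet \<beta> > 0" and b': "mdet \<beta>' > 0" and g: "\<gamma> \<in> fricke_group N"
    and eq: "mmul \<beta> WW = mmul (mmul WW \<gamma>) \<beta>'" and z: "Im z > 0"
  shows "slash k WW (slash k \<beta> f) z = \<mu> WW * \<mu> \<gamma> * slash k \<beta>' f z"
proof -
  have dW: "mdet WW > 0" using mdet_W[OF N0] by simp
  have Wg: "mmul WW \<gamma> \<in> fricke_group N" using Win g by (rule fricke_group.mult)
  have dWg: "mdet (mmul WW \<gamma>) > 0" using fricke_det[OF Wg N0] by simp
  have "slash k WW (slash k \<beta> f) z = slash k (mmul \<beta> WW) f z" by (rule slash_comp[OF b dW z])
  also have "\<dots> = slash k (mmul (mmul WW \<gamma>) \<beta>') f z" unfolding eq ..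
  also have "\<dots> = slash k \<beta>' (slash k (mmul WW \<gamma>) f) z" by (rule slash_comp[OF dWg b' z, symmetric])
  also have "\<dots> = slash k \<beta>' (\<lambda>w. \<mu> (mmul WW \<gamma>) * f w) z"
    by (rule slash_cong[OF b' z]) (use fin[OF Wg] in auto)
  also have "\<dots> = \<mu> (mmul WW \<gamma>) * slash k \<beta>' f z" by (rule slash_cmult)
  also have "\<mu> (mmul WW \<gamma>) = \<mu> WW * \<mu> \<gamma>" using ms Win g by (simp add: multiplier_system_def)
  finally show ?thesis .
qed

lemma phi_ex:
  assumes j: "j \<in> {1..<p}"
  shows "\<exists>j'. j' \<in> {1..<p} \<and> p dvd (1 + N * t^2 * j * j')"
proof -
  define a where "a = N * t^2 * j"
  have "\<not> p dvd j" using j by (auto dest: dvd_imp_le)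
  hence na: "\<not> p dvd a" using pN p_not_t pp unfolding a_def
    by (simp add: prime_dvd_mult_iff prime_dvd_power_iff)
  have "coprime a p" using prime_imp_coprime[OF pp na] by (simp add: coprime_commute)
  then obtain x where x: "[a * x = Suc 0] (mod p)" using cong_solve_coprime_nat by blast
  hence ax: "(a * x) mod p = 1" using p1 by (simp add: cong_def)
  define j' where "j' = ((p - 1) * x) mod p"
  have e1: "(1 + a * (y mod p)) mod p = (1 + a * y) mod p" for y
    by (metis mod_add_right_eq mod_mult_right_eq)
  have e2: "(1 + (p - 1) * (y mod p)) mod p = (1 + (p - 1) * y) mod p" for y
    by (metis mod_add_right_eq mod_mult_right_eq)
  have "(1 + a * j') mod p = (1 + (p - 1) * (a * x)) mod p"
    unfolding j'_def e1 by (simp add: algebra_simps)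
  also have "\<dots> = (1 + (p - 1) * ((a * x) mod p)) mod p" using e2 by simp
  also have "\<dots> = 0" using ax p1 by simp
  finally have dv: "p dvd 1 + a * j'" by (simp add: mod_eq_0_iff_dvd)
  have "j' < p" using p0 by (simp add: j'_def)
  moreover have "j' \<noteq> 0" proof
    assume "j' = 0" thus False using dv p1 by simp
  qed
  ultimately show ?thesis using dv unfolding a_def by (intro exI[of _ j']) auto
qed

definition phi where "phi j = (SOME j'. j' \<in> {1..<p} \<and> p dvd (1 + N * t^2 * j * j'))"

lemma phi: "j \<in> {1..<p} \<Longrightarrow> phi j \<in> {1..<p} \<and> p dvd (1 + N * t^2 * j * phi j)"
  unfolding phi_def using phi_ex by (rule someI_ex)

lemma phi_inj: "inj_on phi {1..<p}"
proof -
  have *: "j1 = j2" if j: "j1 \<in> {1..<p}" "j2 \<in> {1..<p}" "phi j1 = phi j2" "j2 \<le> j1" for j1 j2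
  proof -
    define j' where "j' = phi j1"
    have d1: "p dvd 1 + N * t^2 * j1 * j'" using phi[OF j(1)] by (simp add: j'_def)
    have d2: "p dvd 1 + N * t^2 * j2 * j'" using phi[OF j(2)] j(3) by (simp add: j'_def)
    have "p dvd (1 + N * t^2 * j1 * j') - (1 + N * t^2 * j2 * j')" using d1 d2 by (rule dvd_diff_nat)
    also have "(1 + N * t^2 * j1 * j') - (1 + N * t^2 * j2 * j') = (N * t^2 * j') * (j1 - j2)"
      using j(4) by (simp add: algebra_simps diff_mult_distrib2)
    finally have dv: "p dvd (N * t^2 * j') * (j1 - j2)" .
    have "\<not> p dvd j'" using phi[OF j(1)] by (auto simp: j'_def dest: dvd_imp_le)
    hence "\<not> p dvd N * t^2 * j'" using pN p_not_t pp by (simp add: prime_dvd_mult_iff prime_dvd_power_iff)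
    hence "p dvd j1 - j2" using dv pp by (simp add: prime_dvd_mult_iff)
    moreover have "j1 - j2 < p" using j by auto
    ultimately have "j1 - j2 = 0" by (metis dvd_imp_le not_less neq0_conv)
    thus ?thesis using j(4) by simp
  qed
  show ?thesis unfolding inj_on_def by (metis * nat_le_linear)
qed

lemma alpha_W:
  assumes j: "j \<in> {1..<p}"
  shows "\<exists>\<gamma>. \<gamma> \<in> Gamma0MN (N * t) t \<and> mmul (alpha j) WW = mmul (mmul WW \<gamma>) (alpha (phi j))"
proof -
  define j' where "j' = phi j"
  have dv: "p dvd (1 + N * t^2 * j * j')" using phi[OF j] by (simp add: j'_def)
  define D where "D = (1 + N * t^2 * j * j') div p"
  have pD: "p * D = 1 + N * t^2 * j * j'" unfolding D_def using dv by simp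
  have pDr: "real p * real D = 1 + real N * real t ^ 2 * real j * real j'"
    using arg_cong[OF pD, of real] by simp
  have pDi: "int p * int D - (- (int t * int j')) * (- (int N * int t * int j)) = 1"
    using arg_cong[OF pD, of int] by (simp add: algebra_simps power2_eq_square)
  define \<gamma> where "\<gamma> = (real p, - (real t * real j'), - (real N * real t * real j), real D)"
  have "\<gamma> \<in> Gamma0MN (N * t) t"
    unfolding Gamma0MN_def \<gamma>_def
    by (rule CollectI, rule exI[of _ "int p"], rule exI[of _ "- (int t * int j')"],
       rule exI[of _ "- (int N * int t * int j)"], rule exI[of _ "int D"]) (use pDi in simp)
  moreover have "mmul (alpha j) WW = mmul (mmul WW \<gamma>) (alpha j')"
  proof -
    define s where "s = sqrt (real N)"
    have s0: "s > 0" using N0 by (simp add: s_def)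
    have ss: "real N = s * s" using N0 by (simp add: s_def)
    have L: "mmul (alpha j) WW = (real t * real j * s, - (1 / s), real p * s, 0)"
      unfolding fricke_W_def s_def[symmetric] by (simp add: mmul_def)
    have pDs: "real p * real D = 1 + s * s * real t ^ 2 * real j * real j'" using pDr ss by simp
    have R: "mmul (mmul WW \<gamma>) (alpha j') = (real t * real j * s, - (1 / s), real p * s, 0)"
      unfolding fricke_W_def s_def[symmetric] \<gamma>_def ss
      using s0 pDs by (simp add: mmul_def field_simps power2_eq_square)
    show ?thesis using L R by simp
  qed
  ultimately show ?thesis unfolding j'_def by blast
qed

lemma F_lam: "hecke_p k t p f = (\<lambda>w. CC * ((\<Sum>j=0..<p. slash k (alpha j) f w) + slash k alinf f w))"
  by (rule ext) (simp add: hecke_p_def CC_def)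

lemma det_alpha: "mdet (alpha j) > 0" using p0 by (simp add: mdet_def)
lemma det_alinf: "mdet alinf > 0" using p0 by (simp add: mdet_def)

lemma F_W:
  assumes z: "Im z > 0"
  shows "slash k WW (hecke_p k t p f) z = \<mu> WW * hecke_p k t p f z"
proof -
  have mI: "\<mu> I2 = 1" using mult_unit[OF ms I2_in] .
  have WI: "mmul WW I2 = WW" by (simp add: mmul_def fricke_W_def)
  have s0: "slash k WW (slash k (alpha 0) f) z = \<mu> WW * slash k alinf f z"
  proof -
    have "mmul (alpha 0) WW = mmul (mmul WW I2) alinf" unfolding WI by (simp add: mmul_def fricke_W_def)
    from Wstep[OF det_alpha det_alinf I2_in this z] show ?thesis using mI by simp
  qed
  have sinf: "slash k WW (slash k alinf f) z = \<mu> WW * slash k (alpha 0) f z"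
  proof -
    have "mmul alinf WW = mmul (mmul WW I2) (alpha 0)" unfolding WI by (simp add: mmul_def fricke_W_def)
    from Wstep[OF det_alinf det_alpha I2_in this z] show ?thesis using mI by simp
  qed
  have sj: "slash k WW (slash k (alpha j) f) z = \<mu> WW * slash k (alpha (phi j)) f z" if j: "j \<in> {1..<p}" for j
  proof -
    obtain \<gamma> where g: "\<gamma> \<in> Gamma0MN (N * t) t" "mmul (alpha j) WW = mmul (mmul WW \<gamma>) (alpha (phi j))"
      using alpha_W[OF j] by blast
    have "\<mu> \<gamma> = 1" using triv g(1) by blast
    moreover have "\<gamma> \<in> fricke_group N" using g(1) Gamma0MN_sub by blast
    ultimately show ?thesis using Wstep[OF det_alpha det_alpha _ g(2) z] by simp
  qed
  have perm: "(\<Sum>j=1..<p. slash k (alpha (phi j)) f z) = (\<Sum>j=1..<p. slash k (alpha j) f z)"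
    by (rule sum_perm[OF _ _ phi_inj]) (use phi in auto)
  have split: "(\<Sum>j=0..<p. G j) = G 0 + (\<Sum>j=1..<p. G j)" for G :: "nat \<Rightarrow> complex"
    using sum.atLeast_Suc_lessThan[OF p0, of G] by simp
  have "slash k WW (hecke_p k t p f) z =
      CC * ((\<Sum>j=0..<p. slash k WW (slash k (alpha j) f) z) + slash k WW (slash k alinf f) z)"
    unfolding F_lam slash_cmult slash_add slash_sum ..
  also have "(\<Sum>j=0..<p. slash k WW (slash k (alpha j) f) z) =
      \<mu> WW * slash k alinf f z + (\<Sum>j=1..<p. \<mu> WW * slash k (alpha (phi j)) f z)"
    unfolding split s0 using sj by simp
  also have "CC * (\<mu> WW * slash k alinf f z + (\<Sum>j=1..<p. \<mu> WW * slash k (alpha (phi j)) f z) +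
      slash k WW (slash k alinf f) z) =
      \<mu> WW * (CC * ((slash k (alpha 0) f z + (\<Sum>j=1..<p. slash k (alpha j) f z)) + slash k alinf f z))"
    unfolding sinf sum_distrib_left[symmetric] perm by (simp add: algebra_simps)
  also have "\<dots> = \<mu> WW * hecke_p k t p f z" unfolding F_lam split ..
  finally show ?thesis .
qed

lemma ms_p: "multiplier_system (fricke_group N) (\<lambda>g. \<mu> g ^ p)"
  using ms unfolding multiplier_system_def by (simp add: norm_power power_mult_distrib)

lemma muW_p: "\<mu> WW ^ p = \<mu> WW"
proof -
  have "mmul WW WW = (-1, 0, 0, -1)" using W_sq[OF N0] .
  moreover have "(-1::real, 0::real, 0::real, -1::real) \<in> Gamma0MN (N * t) t"
    unfolding Gamma0MN_def
    by (rule CollectI, rule exI[of _ "-1"], rule exI[of _ 0], rule exI[of _ 0], rule exI[of _ "-1"]) simp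
  ultimately have "\<mu> (mmul WW WW) = 1" using triv by simp
  hence sq: "\<mu> WW ^ 2 = 1" using ms Win by (simp add: multiplier_system_def power2_eq_square)
  obtain m where m: "p = 2 * m + 1" using todd oddE by blast
  have "\<mu> WW ^ p = (\<mu> WW ^ 2) ^ m * \<mu> WW" unfolding m by (simp add: power_mult power_add)
  thus ?thesis using sq by simp
qed

lemma hecke_law: "g \<in> fricke_group N \<Longrightarrow> law k (\<lambda>g. \<mu> g ^ p) (hecke_p k t p f) g"
proof (rule law_all[OF N ms_p])
  show "law k (\<lambda>g. \<mu> g ^ p) (hecke_p k t p f) TT"
    unfolding law_def
  proof (intro allI impI)
    fix z :: complex assume "Im z > 0"
    moreover have "slash k TT (hecke_p k t p f) z = hecke_p k t p f (z + 1)" by (simp add: slash_def mdet_def)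
    ultimately show "slash k TT (hecke_p k t p f) z = \<mu> TT ^ p * hecke_p k t p f z" using F_T by simp
  qed
  show "law k (\<lambda>g. \<mu> g ^ p) (hecke_p k t p f) WW"
    unfolding law_def using F_W muW_p by simp
qed

lemma hecke_holo: "hecke_p k t p f holomorphic_on upper_half_plane"
proof -
  have "(\<lambda>w. CC * ((\<Sum>j=0..<p. slash k (alpha j) f w) + slash k alinf f w)) holomorphic_on upper_half_plane"
    by (intro holomorphic_intros slash_holo[OF fhol] det_alpha det_alinf)
  thus ?thesis unfolding F_lam .
qed

end



definition qf :: "nat \<Rightarrow> (complex \<Rightarrow> complex) \<Rightarrow> complex \<Rightarrow> complex" where
  "qf h R q = R (of_nat h * Ln q / (2 * of_real pi * \<i>))"

definition per :: "nat \<Rightarrow> (complex \<Rightarrow> complex) \<Rightarrow> bool" where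
  "per h R \<longleftrightarrow> (\<forall>z\<in>upper_half_plane. R (z + of_nat h) = R z)"

lemma Im_div2pii: "Im (x / (2 * of_real pi * \<i>)) = - Re x / (2 * pi)"
  by (simp add: Im_divide power2_eq_square)

lemma Im_qarg:
  assumes "h > 0" "q \<noteq> 0" "norm q < 1"
  shows "Im (of_nat h * Ln q / (2 * of_real pi * \<i>)) > 0"
proof -
  have "ln (norm q) < 0" using assms by simp
  hence "Re (of_nat h * Ln q) < 0" using assms by (simp add: Re_Ln mult_pos_neg)
  thus ?thesis unfolding Im_div2pii by (simp add: divide_neg_pos)
qed

lemma per_nat:
  assumes "per h R" "Im z > 0"
  shows "R (z + of_nat h * of_nat n) = R z"
proof (induction n)
  case 0 thus ?case by simp
next
  case (Suc n)
  have "R (z + of_nat h * of_nat (Suc n)) = R ((z + of_nat h * of_nat n) + of_nat h)" by (simp add: algebra_simps)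
  also have "\<dots> = R (z + of_nat h * of_nat n)" using assms by (auto simp: per_def upper_half_plane_def)
  finally show ?case using Suc by simp
qed

lemma per_int:
  assumes "per h R" "Im z > 0"
  shows "R (z + of_nat h * of_int m) = R z"
proof (cases "m \<ge> 0")
  case True
  then obtain n where "m = int n" using nonneg_int_cases by blast
  thus ?thesis using per_nat[OF assms] by simp
next
  case False
  define n where "n = nat (-m)"
  have m: "m = - int n" using False by (simp add: n_def)
  have "R ((z + of_nat h * of_int m) + of_nat h * of_nat n) = R (z + of_nat h * of_int m)"
    using assms by (intro per_nat) (auto simp: m)
  thus ?thesis by (simp add: m)
qed

lemma Ln_exp_int: "\<exists>n::int. Ln (exp v) = v + of_int n * (2 * of_real pi * \<i>)"
proof -
  have "exp (Ln (exp v)) = exp v" by simp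
  then obtain n :: int where "Ln (exp v) = v + of_int (2 * n) * pi * \<i>" using exp_eq by blast
  thus ?thesis by (intro exI[of _ n]) (simp add: algebra_simps)
qed

lemma qf_exp:
  assumes "h > 0" "per h R" "Im z > 0"
  shows "qf h R (exp (2 * of_real pi * \<i> * z / of_nat h)) = R z"
proof -
  obtain n :: int where n: "Ln (exp (2 * of_real pi * \<i> * z / of_nat h)) = 2 * of_real pi * \<i> * z / of_nat h + of_int n * (2 * of_real pi * \<i>)"
    using Ln_exp_int by blast
  have "of_nat h * Ln (exp (2 * of_real pi * \<i> * z / of_nat h)) / (2 * of_real pi * \<i>) = z + of_nat h * of_int n"
    unfolding n using assms(1) by (simp add: field_simps)
  thus ?thesis unfolding qf_def using per_int[OF assms(2,3)] by simp
qed

lemma qf_holo: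
  assumes h: "h > 0" and Rh: "R holomorphic_on upper_half_plane" and p: "per h R"
  shows "qf h R holomorphic_on (ball 0 1 - {0})"
proof -
  define S1 where "S1 = ball 0 1 - {0} - (\<real>\<^sub>\<le>\<^sub>0 :: complex set)"
  define S2 where "S2 = ball 0 1 - {0} - (\<real>\<^sub>\<ge>\<^sub>0 :: complex set)"
  define L2 where "L2 q = of_nat h * (Ln (-q) + \<i> * of_real pi) / (2 * of_real pi * \<i>)" for q
  have o1: "open S1" unfolding S1_def by (intro open_Diff) auto
  have o2: "open S2" unfolding S2_def by (intro open_Diff) auto
  have un: "ball 0 1 - {0} = S1 \<union> S2"
  proof -
    have "q = 0" if "q \<in> \<real>\<^sub>\<le>\<^sub>0" "q \<in> \<real>\<^sub>\<ge>\<^sub>0" for q :: complex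
      using that by (auto simp: complex_nonpos_Reals_iff complex_nonneg_Reals_iff complex_eq_iff)
    thus ?thesis unfolding S1_def S2_def by blast
  qed
  have in1: "(\<lambda>q. of_nat h * Ln q / (2 * of_real pi * \<i>)) ` S1 \<subseteq> upper_half_plane"
    using Im_qarg[OF h] by (auto simp: S1_def upper_half_plane_def)
  have H1: "(\<lambda>q. of_nat h * Ln q / (2 * of_real pi * \<i>)) holomorphic_on S1"
    by (intro holomorphic_intros) (auto simp: S1_def)
  have qfe: "qf h R = (\<lambda>q. R (of_nat h * Ln q / (2 * of_real pi * \<i>)))" by (rule ext) (simp add: qf_def)
  have hol1: "qf h R holomorphic_on S1"
    using holomorphic_on_compose_gen[OF H1 Rh in1] unfolding qfe by (simp add: o_def)
  have ImL2: "Im (L2 q) > 0" if "q \<noteq> 0" "norm q < 1" for q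
  proof -
    have "Re (Ln (-q) + \<i> * of_real pi) = ln (norm q)" using that by (simp add: Re_Ln)
    moreover have "ln (norm q) < 0" using that by simp
    ultimately have "Re (of_nat h * (Ln (-q) + \<i> * of_real pi)) < 0" using h by (simp add: mult_pos_neg)
    thus ?thesis unfolding L2_def Im_div2pii by (simp add: divide_neg_pos)
  qed
  have in2: "L2 ` S2 \<subseteq> upper_half_plane" using ImL2 by (auto simp: S2_def upper_half_plane_def)
  have H2: "L2 holomorphic_on S2" unfolding L2_def
  proof -
    have "(\<lambda>q. Ln (-q)) holomorphic_on S2"
      by (rule holomorphic_on_Ln') (auto simp: S2_def complex_nonpos_Reals_iff complex_nonneg_Reals_iff intro: holomorphic_intros)
    thus "(\<lambda>q. of_nat h * (Ln (-q) + \<i> * of_real pi) / (2 * of_real pi * \<i>)) holomorphic_on S2"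
      by (intro holomorphic_intros) (auto simp: S2_def)
  qed
  have hol2': "(\<lambda>q. R (L2 q)) holomorphic_on S2"
    using holomorphic_on_compose_gen[OF H2 Rh in2] by (simp add: o_def)
  have eq: "qf h R q = R (L2 q)" if "q \<noteq> 0" "norm q < 1" for q
  proof -
    have "exp (Ln q) = exp (Ln (-q) + \<i> * of_real pi)" using that by (simp add: exp_add)
    then obtain n :: int where n: "Ln q = Ln (-q) + \<i> * of_real pi + of_int (2 * n) * pi * \<i>" using exp_eq by blast
    have "of_nat h * Ln q / (2 * of_real pi * \<i>) = L2 q + of_nat h * of_int n"
      unfolding n L2_def by (simp add: field_simps)
    thus ?thesis unfolding qf_def using per_int[OF p ImL2[OF that]] by simp
  qed
  have hol2: "qf h R holomorphic_on S2"
    by (rule holomorphic_transform[OF hol2']) (use eq in \<open>auto simp: S2_def\<close>)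
  show ?thesis unfolding un by (rule holomorphic_on_Un[OF hol1 hol2 o1 o2])
qed

lemma qf_iso:
  assumes "h > 0" "R holomorphic_on upper_half_plane" "per h R"
  shows "isolated_singularity_at (qf h R) 0"
  by (rule isolated_singularity_at_holomorphic[where s = "ball 0 1"]) (use qf_holo[OF assms] in auto)

definition good :: "nat \<Rightarrow> (complex \<Rightarrow> complex) \<Rightarrow> bool" where
  "good h R \<longleftrightarrow> h > 0 \<and> R holomorphic_on upper_half_plane \<and> per h R \<and> qf h R meromorphic_on {0}"

lemma good_of_cusp:
  assumes "h > 0" "R holomorphic_on upper_half_plane" "per h R" "not_essential (qf h R) 0"
  shows "good h R"
  using assms qf_iso[OF assms(1-3)] by (simp add: good_def meromorphic_at_iff)

lemma cusp_of_good: "good h R \<Longrightarrow> not_essential (qf h R) 0"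
  by (simp add: good_def meromorphic_at_iff)

lemma ev_punct: "eventually (\<lambda>q. q \<noteq> 0 \<and> norm q < 1) (at (0::complex))"
  unfolding eventually_at by (intro exI[of _ 1]) (auto simp: dist_norm)

lemma good_cong:
  assumes g: "good h R1" and eq: "\<And>z. Im z > 0 \<Longrightarrow> R1 z = R2 z"
  shows "good h R2"
proof -
  have h: "h > 0" using g by (simp add: good_def)
  have "R2 holomorphic_on upper_half_plane"
  proof (rule holomorphic_transform[of R1])
    show "R1 holomorphic_on upper_half_plane" using g by (simp add: good_def)
  qed (use eq in \<open>simp add: upper_half_plane_def\<close>)
  moreover have "per h R2"
    unfolding per_def
  proof
    fix z assume "z \<in> upper_half_plane"
    hence z: "Im z > 0" by (simp add: upper_half_plane_def)
    have "R1 (z + of_nat h) = R1 z" using g z by (auto simp: good_def per_def upper_half_plane_def)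
    moreover have "R1 (z + of_nat h) = R2 (z + of_nat h)" using z by (intro eq) simp
    ultimately show "R2 (z + of_nat h) = R2 z" using eq[OF z] by simp
  qed
  moreover have "qf h R2 meromorphic_on {0}"
  proof -
    have "eventually (\<lambda>q. qf h R1 q = qf h R2 q) (at 0)"
      using ev_punct by eventually_elim (use Im_qarg[OF h] eq in \<open>simp add: qf_def\<close>)
    thus ?thesis using g meromorphic_on_cong[of "{0}" "qf h R1" "qf h R2" "{0}"] by (simp add: good_def)
  qed
  ultimately show ?thesis using h by (simp add: good_def)
qed

lemma good_add:
  assumes "good h R1" "good h R2"
  shows "good h (\<lambda>z. R1 z + R2 z)"
proof -
  have "qf h (\<lambda>z. R1 z + R2 z) = (\<lambda>q. qf h R1 q + qf h R2 q)" by (rule ext) (simp add: qf_def)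
  thus ?thesis using assms unfolding good_def per_def
    by (auto intro!: holomorphic_intros meromorphic_intros)
qed

lemma good_cmult:
  assumes "good h R"
  shows "good h (\<lambda>z. c * R z)"
proof -
  have "qf h (\<lambda>z. c * R z) = (\<lambda>q. c * qf h R q)" by (rule ext) (simp add: qf_def)
  thus ?thesis using assms unfolding good_def per_def
    by (auto intro!: holomorphic_intros meromorphic_intros)
qed

lemma good_zero: "h > 0 \<Longrightarrow> good h (\<lambda>z. 0)"
  unfolding good_def per_def qf_def by (auto intro!: holomorphic_intros meromorphic_intros)

lemma good_sum:
  assumes "finite I" "h > 0" "\<And>i. i \<in> I \<Longrightarrow> good h (R i)"
  shows "good h (\<lambda>z. \<Sum>i\<in>I. R i z)"
  using assms
proof (induction I rule: finite_induct)
  case empty thus ?case using good_zero by simp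
next
  case (insert x F)
  have "good h (\<lambda>z. R x z + (\<Sum>i\<in>F. R i z))" using insert by (intro good_add) auto
  thus ?case using insert by simp
qed

lemma good_affine:
  fixes g d e H :: nat and b :: real
  assumes gQ: "good h Q" and g: "g > 0" and d: "d > 0" and e: "e > 0" and H: "H > 0"
    and rel: "g * H = e * d * h"
  shows "good H (\<lambda>z. Q ((of_nat g * z + of_real b) / of_nat d))"
proof -
  have h: "h > 0" and Qh: "Q holomorphic_on upper_half_plane" and Qp: "per h Q"
    and Qm: "qf h Q meromorphic_on {0}" using gQ by (auto simp: good_def)
  define A where "A z = (of_nat g * z + of_real b) / (of_nat d :: complex)" for z
  have ImA: "Im (A z) > 0" if "Im z > 0" for z using that g d by (simp add: A_def)
  have relc: "of_nat g * of_nat H / of_nat d = (of_nat h * of_nat e :: complex)"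
  proof -
    have "(of_nat (g * H) :: complex) = of_nat (e * d * h)" using rel by simp
    thus ?thesis using d by (simp add: field_simps)
  qed
  have hol: "(\<lambda>z. Q (A z)) holomorphic_on upper_half_plane"
  proof -
    have "A holomorphic_on upper_half_plane" unfolding A_def using d by (intro holomorphic_intros) auto
    moreover have "A ` upper_half_plane \<subseteq> upper_half_plane" using ImA by (auto simp: upper_half_plane_def)
    ultimately show ?thesis using holomorphic_on_compose_gen[OF _ Qh] by (simp add: o_def)
  qed
  have per: "per H (\<lambda>z. Q (A z))"
    unfolding per_def
  proof
    fix z assume "z \<in> upper_half_plane"
    hence z: "Im z > 0" by (simp add: upper_half_plane_def)
    have "A (z + of_nat H) = A z + of_nat h * of_nat e"
      unfolding A_def relc[symmetric] using d by (simp add: field_simps)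
    thus "Q (A (z + of_nat H)) = Q (A z)" using per_nat[OF Qp ImA[OF z]] by simp
  qed
  define \<zeta> where "\<zeta> = exp (2 * of_real pi * \<i> * of_real b / (of_nat d * of_nat h))"
  have ev: "eventually (\<lambda>q. qf H (\<lambda>z. Q (A z)) q = qf h Q (\<zeta> * q ^ e)) (at 0)"
    using ev_punct
  proof eventually_elim
    case (elim q)
    define w where "w = of_nat H * Ln q / (2 * of_real pi * \<i>)"
    have w: "Im w > 0" using Im_qarg[OF H] elim by (simp add: w_def)
    have "2 * of_real pi * \<i> * A w / of_nat h = of_nat e * Ln q + 2 * of_real pi * \<i> * of_real b / (of_nat d * of_nat h)"
    proof -
      have "2 * of_real pi * \<i> * A w / of_nat h = (of_nat g * of_nat H / of_nat d) * Ln q / of_nat h +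
          2 * of_real pi * \<i> * of_real b / (of_nat d * of_nat h)"
        unfolding A_def w_def using d h by (simp add: field_simps)
      also have "\<dots> = of_nat e * Ln q + 2 * of_real pi * \<i> * of_real b / (of_nat d * of_nat h)"
        unfolding relc using h by simp
      finally show ?thesis .
    qed
    hence "exp (2 * of_real pi * \<i> * A w / of_nat h) = \<zeta> * q ^ e"
      using elim by (simp add: exp_add exp_of_nat_mult \<zeta>_def mult.commute)
    hence "qf h Q (\<zeta> * q ^ e) = Q (A w)" using qf_exp[OF h Qp ImA[OF w]] by simp
    thus ?case by (simp add: qf_def w_def)
  qed
  have "(\<lambda>q. qf h Q (\<zeta> * q ^ e)) meromorphic_on {0}"
    by (rule meromorphic_on_compose[OF Qm]) (use e in \<open>auto intro!: analytic_intros\<close>)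
  hence "qf H (\<lambda>z. Q (A z)) meromorphic_on {0}"
    using meromorphic_on_cong[of "{0}" "qf H (\<lambda>z. Q (A z))" "\<lambda>q. qf h Q (\<zeta> * q ^ e)" "{0}"] ev by simp
  thus ?thesis using hol per H unfolding good_def A_def by simp
qed



lemma decomp:
  fixes m1 m2 m3 m4 :: int
  assumes P: "m1 * m4 - m2 * m3 = P" "P > 0"
  shows "\<exists>\<sigma> g b d. \<sigma> \<in> SL2Z \<and> g > 0 \<and> d > 0 \<and> g * d = P \<and>
     (of_int m1, of_int m2, of_int m3, of_int m4) = mmul \<sigma> (of_int g, of_int b, 0, of_int d)"
proof -
  define g0 where "g0 = gcd m1 m3"
  have nz: "m1 \<noteq> 0 \<or> m3 \<noteq> 0" using P by auto
  hence g0: "g0 > 0" by (simp add: g0_def)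
  obtain x y where xy: "x * m1 + y * m3 = g0" using bezout_int unfolding g0_def by blast
  obtain u1 where u1: "m1 = g0 * u1" unfolding g0_def by (meson dvdE gcd_dvd1)
  obtain u3 where u3: "m3 = g0 * u3" unfolding g0_def by (meson dvdE gcd_dvd2)
  have det1: "u1 * x - (-y) * u3 = 1"
  proof -
    have "g0 * (u1 * x + y * u3) = g0 * 1" using xy u1 u3 by (simp add: algebra_simps)
    thus ?thesis using g0 by simp
  qed
  define d where "d = u1 * m4 - m2 * u3"
  define b where "b = x * m2 + y * m4"
  have gd: "g0 * d = P" using P u1 u3 by (simp add: d_def algebra_simps)
  have d0: "d > 0" using gd g0 P by (metis pos_imp_zdiv_pos_iff zero_less_mult_pos)
  have e2: "u1 * b - y * d = m2"
  proof -
    have "u1 * b - y * d = m2 * (u1 * x + y * u3)" by (simp add: b_def d_def algebra_simps)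
    thus ?thesis using det1 by simp
  qed
  have e4: "u3 * b + x * d = m4"
  proof -
    have "u3 * b + x * d = m4 * (u1 * x + y * u3)" by (simp add: b_def d_def algebra_simps)
    thus ?thesis using det1 by simp
  qed
  define \<sigma> :: mat2 where "\<sigma> = (of_int u1, of_int (-y), of_int u3, of_int x)"
  have "\<sigma> \<in> SL2Z" unfolding SL2Z_def Gamma0MN_def \<sigma>_def
    by (rule CollectI, rule exI[of _ u1], rule exI[of _ "-y"], rule exI[of _ u3], rule exI[of _ x]) (use det1 in simp)
  moreover have "(of_int m1, of_int m2, of_int m3, of_int m4) = mmul \<sigma> (of_int g0, of_int b, 0, of_int d)"
  proof -
    have "real_of_int m2 = of_int (u1 * b - y * d)" using e2 by simp
    moreover have "real_of_int m4 = of_int (u3 * b + x * d)" using e4 by simp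
    ultimately show ?thesis unfolding \<sigma>_def mmul_def using u1 u3 by (simp add: algebra_simps)
  qed
  ultimately show ?thesis using g0 d0 gd by blast
qed

lemma qf_eta: "qf h R = (\<lambda>q. R (of_nat h * Ln q / (2 * of_real pi * \<i>)))"
  by (rule ext) (simp add: qf_def)

lemma SL2Z_det: "\<sigma> \<in> SL2Z \<Longrightarrow> mdet \<sigma> = 1"
  unfolding SL2Z_def by (rule Gamma0MN_det)

lemma cusp_good:
  assumes fh: "f holomorphic_on upper_half_plane" and fc: "meromorphic_at_cusps k f" and s: "\<sigma> \<in> SL2Z"
  shows "\<exists>h. good h (slash k \<sigma> f)"
proof -
  obtain h :: nat where h: "h > 0" "\<forall>z\<in>upper_half_plane. slash k \<sigma> f (z + of_nat h) = slash k \<sigma> f z"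
    "not_essential (\<lambda>q. slash k \<sigma> f (of_nat h * Ln q / (2 * of_real pi * \<i>))) 0"
    using fc s unfolding meromorphic_at_cusps_def by blast
  have "good h (slash k \<sigma> f)"
    by (rule good_of_cusp) (use h slash_holo[OF fh] SL2Z_det[OF s] in \<open>auto simp: per_def qf_eta\<close>)
  thus ?thesis by blast
qed

lemma good_cusp:
  assumes "\<And>\<sigma>. \<sigma> \<in> SL2Z \<Longrightarrow> \<exists>h. good h (slash k \<sigma> F)"
  shows "meromorphic_at_cusps k F"
  unfolding meromorphic_at_cusps_def
proof
  fix \<sigma> assume "\<sigma> \<in> SL2Z"
  then obtain h where g: "good h (slash k \<sigma> F)" using assms by blast
  show "\<exists>h::nat. h > 0 \<and> (\<forall>z\<in>upper_half_plane. slash k \<sigma> F (z + of_nat h) = slash k \<sigma> F z) \<and>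
        not_essential (\<lambda>q. slash k \<sigma> F (of_nat h * Ln q / (2 * of_real pi * \<i>))) 0"
    using g cusp_of_good[OF g] by (intro exI[of _ h]) (auto simp: good_def per_def qf_eta)
qed

lemma hecke_cusp:
  assumes p: "p > 0" and fh: "f holomorphic_on upper_half_plane" and fc: "meromorphic_at_cusps k f"
  shows "meromorphic_at_cusps k (hecke_p k t p f)"
proof (rule good_cusp)
  fix \<sigma> assume s: "\<sigma> \<in> SL2Z"
  then obtain a b c d :: int where sig: "\<sigma> = (of_int a, of_int b, of_int c, of_int d)" and det: "a*d - b*c = 1"
    unfolding SL2Z_def Gamma0MN_def by blast
  define \<beta> :: "nat \<Rightarrow> mat2" where "\<beta> j = (if j < p then (1, real t * real j, 0, real p) else (real p, 0, 0, 1))" for j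
  define m1 where "m1 j = (if j < p then a + int t * int j * c else int p * a)" for j
  define m2 where "m2 j = (if j < p then b + int t * int j * d else int p * b)" for j
  define m3 where "m3 j = (if j < p then int p * c else c)" for j
  define m4 where "m4 j = (if j < p then int p * d else d)" for j
  have mul: "mmul (\<beta> j) \<sigma> = (of_int (m1 j), of_int (m2 j), of_int (m3 j), of_int (m4 j))" for j
    by (simp add: \<beta>_def sig mmul_def m1_def m2_def m3_def m4_def)
  have mdet_m: "m1 j * m4 j - m2 j * m3 j = int p" for j
  proof -
    have "m1 j * m4 j - m2 j * m3 j = int p * (a*d - b*c)"
      by (simp add: m1_def m2_def m3_def m4_def algebra_simps)
    thus ?thesis using det by simp
  qed
  define P where "P j \<sigma>' gg bb dd hh \<longleftrightarrow> \<sigma>' \<in> SL2Z \<and> gg > 0 \<and> dd > 0 \<and> gg * dd = int p \<and>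
      mmul (\<beta> j) \<sigma> = mmul \<sigma>' (of_int gg, of_int bb, 0, of_int dd) \<and> good hh (slash k \<sigma>' f)"
    for j \<sigma>' gg bb dd and hh :: nat
  have ex: "\<forall>j. \<exists>\<sigma>' gg bb dd hh. P j \<sigma>' gg bb dd hh"
  proof
    fix j
    obtain \<sigma>' gg dd bb where D: "\<sigma>' \<in> SL2Z" "gg > 0" "dd > 0" "gg * dd = int p"
      "(of_int (m1 j), of_int (m2 j), of_int (m3 j), of_int (m4 j)) = mmul \<sigma>' (of_int gg, of_int bb, 0, of_int dd)"
      using decomp[OF mdet_m[of j]] p by auto
    obtain hh where "good hh (slash k \<sigma>' f)" using cusp_good[OF fh fc D(1)] by blast
    thus "\<exists>\<sigma>' gg bb dd hh. P j \<sigma>' gg bb dd hh" using D unfolding P_def mul by blast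
  qed
  obtain S where S: "\<forall>j. \<exists>gg bb dd hh. P j (S j) gg bb dd hh" using choice[OF ex] by blast
  obtain G where G: "\<forall>j. \<exists>bb dd hh. P j (S j) (G j) bb dd hh" using choice[OF S] by blast
  obtain B where B: "\<forall>j. \<exists>dd hh. P j (S j) (G j) (B j) dd hh" using choice[OF G] by blast
  obtain D where D: "\<forall>j. \<exists>hh. P j (S j) (G j) (B j) (D j) hh" using choice[OF B] by blast
  obtain hh where hh: "\<forall>j. P j (S j) (G j) (B j) (D j) (hh j)" using choice[OF D] by blast
  have PP: "S j \<in> SL2Z" "G j > 0" "D j > 0" "G j * D j = int p"
      "mmul (\<beta> j) \<sigma> = mmul (S j) (of_int (G j), of_int (B j), 0, of_int (D j))"
      "good (hh j) (slash k (S j) f)" for j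
    using hh unfolding P_def by auto
  define gn where "gn j = nat (G j)" for j
  define dn where "dn j = nat (D j)" for j
  have gdn: "gn j * dn j = p" for j
  proof -
    have "int (gn j * dn j) = int p" using PP(2,3,4)[of j] by (simp add: gn_def dn_def)
    thus ?thesis by (simp only: of_nat_eq_iff)
  qed
  have hpos: "hh j > 0" for j using PP(6)[of j] by (simp add: good_def)
  define H where "H = p * (\<Prod>j\<in>{0..p}. hh j)"
  have H0: "H > 0" unfolding H_def using p hpos by simp
  define e where "e j = gn j * gn j * (\<Prod>i\<in>{0..p} - {j}. hh i)" for j
  have rel: "gn j * H = e j * dn j * hh j" if "j \<in> {0..p}" for j
  proof -
    have "(\<Prod>i\<in>{0..p}. hh i) = hh j * (\<Prod>i\<in>{0..p} - {j}. hh i)"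
      using that by (simp add: prod.remove)
    thus ?thesis unfolding H_def e_def gdn[of j, symmetric] by (simp add: algebra_simps)
  qed
  have e0: "e j > 0" for j using PP(2)[of j] hpos by (simp add: e_def gn_def)
  define C where "C j = complex_of_real (mdet (of_int (G j), of_int (B j), 0, of_int (D j)) powr (of_int k / 2)) *
      (of_int (D j)) powi (-k)" for j
  define R where "R j z = slash k (of_int (G j), of_int (B j), 0, of_int (D j)) (slash k (S j) f) z" for j z
  have Rform: "R j = (\<lambda>z. C j * slash k (S j) f ((of_nat (gn j) * z + of_real (of_int (B j))) / of_nat (dn j)))" for j
  proof -
    have "of_nat (gn j) = (of_int (G j) :: complex)" "of_nat (dn j) = (of_int (D j) :: complex)"
      using PP(2,3)[of j] by (simp_all add: gn_def dn_def)
    thus ?thesis by (intro ext) (simp add: R_def slash_def C_def)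
  qed
  have goodR: "good H (R j)" if "j \<in> {0..p}" for j
  proof -
    have "good H (\<lambda>z. slash k (S j) f ((of_nat (gn j) * z + of_real (of_int (B j))) / of_nat (dn j)))"
      by (rule good_affine[OF PP(6) _ _ e0 H0 rel[OF that]]) (use PP(2,3)[of j] in \<open>simp_all add: gn_def dn_def\<close>)
    thus ?thesis unfolding Rform by (rule good_cmult)
  qed
  define CC0 where "CC0 = complex_of_real (real p powr (of_int k / 2 - 1))"
  have Flam: "hecke_p k t p f = (\<lambda>w. CC0 * (\<Sum>j\<in>{0..p}. slash k (\<beta> j) f w))"
  proof (rule ext)
    fix w
    have "{0..p} = insert p {0..<p}" by auto
    hence "(\<Sum>j\<in>{0..p}. slash k (\<beta> j) f w) = slash k (\<beta> p) f w + (\<Sum>j\<in>{0..<p}. slash k (\<beta> j) f w)"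
      by simp
    also have "(\<Sum>j\<in>{0..<p}. slash k (\<beta> j) f w) = (\<Sum>j\<in>{0..<p}. slash k (1, real t * real j, 0, real p) f w)"
      by (rule sum.cong) (auto simp: \<beta>_def)
    finally show "hecke_p k t p f w = CC0 * (\<Sum>j\<in>{0..p}. slash k (\<beta> j) f w)"
      by (simp add: hecke_p_def CC0_def \<beta>_def)
  qed
  have eqR: "slash k \<sigma> (hecke_p k t p f) z = CC0 * (\<Sum>j\<in>{0..p}. R j z)" if z: "Im z > 0" for z
  proof -
    have ds: "mdet \<sigma> > 0" using SL2Z_det[OF s] by simp
    have trm: "slash k \<sigma> (slash k (\<beta> j) f) z = R j z" for j
    proof -
      have db: "mdet (\<beta> j) > 0" using p by (simp add: \<beta>_def mdet_def)
      have dS: "mdet (S j) > 0" using SL2Z_det[OF PP(1)] by simp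
      have dB: "mdet (of_int (G j), of_int (B j), 0, of_int (D j)) > 0"
        using PP(2,3)[of j] by (simp add: mdet_def)
      have "slash k \<sigma> (slash k (\<beta> j) f) z = slash k (mmul (\<beta> j) \<sigma>) f z" by (rule slash_comp[OF db ds z])
      also have "\<dots> = slash k (mmul (S j) (of_int (G j), of_int (B j), 0, of_int (D j))) f z" unfolding PP(5) ..
      also have "\<dots> = R j z" unfolding R_def by (rule slash_comp[OF dS dB z, symmetric])
      finally show ?thesis .
    qed
    show ?thesis unfolding Flam slash_cmult slash_sum trm ..
  qed
  have "good H (\<lambda>z. CC0 * (\<Sum>j\<in>{0..p}. R j z))"
    by (intro good_cmult good_sum) (use goodR H0 in auto)
  hence "good H (slash k \<sigma> (hecke_p k t p f))"
    by (rule good_cong) (use eqR in simp)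
  thus "\<exists>h. good h (slash k \<sigma> (hecke_p k t p f))" by blast
qed



abbreviation "HM k N \<nu> \<equiv> weakly_holomorphic_mf k (fricke_group N) \<nu>"

lemma wh_cong: "(\<And>g. g \<in> fricke_group N \<Longrightarrow> \<nu>1 g = \<nu>2 g) \<Longrightarrow> HM k N \<nu>1 = HM k N \<nu>2"
  unfolding weakly_holomorphic_mf_def by auto

lemma good_scale:
  assumes "good h Q" "e > 0"
  shows "good (h * e) Q"
proof -
  have h: "h > 0" using assms by (simp add: good_def)
  have "good (h * e) (\<lambda>z. Q ((of_nat 1 * z + of_real 0) / of_nat 1))"
    by (rule good_affine[OF assms(1)]) (use h assms(2) in auto)
  thus ?thesis by simp
qed

lemma wh_lin:
  assumes F: "F \<in> HM k N \<nu>" and G: "G \<in> HM k N \<nu>"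
  shows "(\<lambda>z. F z - c * G z) \<in> HM k N \<nu>"
proof -
  have Fh: "F holomorphic_on upper_half_plane" and Gh: "G holomorphic_on upper_half_plane"
    and Fc: "meromorphic_at_cusps k F" and Gc: "meromorphic_at_cusps k G"
    using F G by (auto simp: weakly_holomorphic_mf_def)
  have hol: "(\<lambda>z. F z - c * G z) holomorphic_on upper_half_plane"
    using Fh Gh by (intro holomorphic_intros)
  have lw: "\<forall>g\<in>fricke_group N. \<forall>z\<in>upper_half_plane. slash k g (\<lambda>z. F z - c * G z) z = \<nu> g * (F z - c * G z)"
    using F G by (auto simp: weakly_holomorphic_mf_def slash_diff slash_cmult algebra_simps)
  have cu: "meromorphic_at_cusps k (\<lambda>z. F z - c * G z)"
  proof (rule good_cusp)
    fix \<sigma> assume s: "\<sigma> \<in> SL2Z"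
    obtain h1 where g1: "good h1 (slash k \<sigma> F)" using cusp_good[OF Fh Fc s] by blast
    obtain h2 where g2: "good h2 (slash k \<sigma> G)" using cusp_good[OF Gh Gc s] by blast
    have "h1 > 0" "h2 > 0" using g1 g2 by (auto simp: good_def)
    have a: "good (h1 * h2) (slash k \<sigma> F)" using good_scale[OF g1 \<open>h2 > 0\<close>] .
    have b: "good (h1 * h2) (slash k \<sigma> G)" using good_scale[OF g2 \<open>h1 > 0\<close>] by (simp add: mult.commute)
    have "good (h1 * h2) (\<lambda>z. slash k \<sigma> F z + (- c) * slash k \<sigma> G z)"
      by (intro good_add good_cmult a b)
    hence "good (h1 * h2) (slash k \<sigma> (\<lambda>z. F z - c * G z))"
      by (rule good_cong) (simp add: slash_diff slash_cmult)
    thus "\<exists>h. good h (slash k \<sigma> (\<lambda>z. F z - c * G z))" by blast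
  qed
  show ?thesis using hol lw cu by (simp add: weakly_holomorphic_mf_def)
qed

definition hyps where "hyps N t \<mu> \<longleftrightarrow> multiplier_system (fricke_group N) \<mu> \<and>
   (\<forall>g\<in>fricke_group N. \<mu> g ^ (2 * t) = 1) \<and> (\<forall>g\<in>Gamma0MN (N * t) t. \<mu> g = 1)"

lemma hyps_pow: "hyps N t \<mu> \<Longrightarrow> hyps N t (\<lambda>g. \<mu> g ^ m)"
  unfolding hyps_def multiplier_system_def
  by (auto simp: norm_power power_mult_distrib simp flip: power_mult) (metis mult.commute power_mult power_one)

lemma one_step:
  assumes "N \<in> {1,2,3,4}" "t > 0" "hyps N t \<mu>" "prime p" "\<not> p dvd N" "[p ^ 2 = 1] (mod 2 * t)"
    and f: "f \<in> HM k N \<mu>"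
  shows "hecke_p k t p f \<in> HM k N (\<lambda>g. \<mu> g ^ p)"
proof -
  have fh: "f holomorphic_on upper_half_plane" and fc: "meromorphic_at_cusps k f"
    and fl: "\<forall>g\<in>fricke_group N. law k \<mu> f g"
    using f by (auto simp: weakly_holomorphic_mf_def law_def upper_half_plane_def)
  interpret hk N t p k \<mu> f
    using assms fh fl by unfold_locales (auto simp: hyps_def)
  have "hecke_p k t p f holomorphic_on upper_half_plane" by (rule hecke_holo)
  moreover have "\<forall>g\<in>fricke_group N. \<forall>z\<in>upper_half_plane. slash k g (hecke_p k t p f) z = \<mu> g ^ p * hecke_p k t p f z"
    using hecke_law by (auto simp: law_def upper_half_plane_def)
  moreover have "meromorphic_at_cusps k (hecke_p k t p f)" by (rule hecke_cusp[OF p0 fh fc])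
  ultimately show ?thesis by (simp add: weakly_holomorphic_mf_def)
qed

lemma pow_p2:
  assumes "[p ^ 2 = 1] (mod 2 * t)" "x ^ (2 * t) = (1::complex)" "p > 0"
  shows "x ^ (p ^ 2) = x"
proof -
  have "2 * t dvd p^2 - 1" using cong_to_1_nat[OF assms(1)] .
  then obtain m where m: "p^2 - 1 = 2 * t * m" by blast
  have "p^2 \<ge> 1" using assms(3) by simp
  hence "p^2 = 1 + 2 * t * m" using m by linarith
  hence "x ^ (p^2) = x * (x ^ (2 * t)) ^ m" by (simp add: power_add power_mult)
  thus ?thesis using assms(2) by simp
qed

lemma iter:
  assumes N: "N \<in> {1,2,3,4}" and t: "t > 0" and h: "hyps N t \<mu>" and pp: "prime p" and pN: "\<not> p dvd N"
    and pc: "[p ^ 2 = 1] (mod 2 * t)"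
  shows "\<forall>f \<in> HM k N \<mu>. hecke_pp k t p n f \<in> HM k N (\<lambda>g. \<mu> g ^ (p ^ n)) \<and>
                         hecke_pp k t p (Suc n) f \<in> HM k N (\<lambda>g. \<mu> g ^ (p ^ Suc n))"
proof (induction n)
  case 0
  show ?case
  proof
    fix f assume f: "f \<in> HM k N \<mu>"
    have "hecke_p k t p f \<in> HM k N (\<lambda>g. \<mu> g ^ p)" by (rule one_step[OF N t h pp pN pc f])
    thus "hecke_pp k t p 0 f \<in> HM k N (\<lambda>g. \<mu> g ^ (p ^ 0)) \<and>
          hecke_pp k t p (Suc 0) f \<in> HM k N (\<lambda>g. \<mu> g ^ (p ^ Suc 0))" using f by simp
  qed
next
  case (Suc n)
  show ?case
  proof
    fix f assume f: "f \<in> HM k N \<mu>"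
    have A: "hecke_pp k t p n f \<in> HM k N (\<lambda>g. \<mu> g ^ (p ^ n))" and
         B: "hecke_pp k t p (Suc n) f \<in> HM k N (\<lambda>g. \<mu> g ^ (p ^ Suc n))" using Suc f by auto
    have hS: "hyps N t (\<lambda>g. \<mu> g ^ (p ^ Suc n))" by (rule hyps_pow[OF h])
    have C: "hecke_p k t p (hecke_pp k t p (Suc n) f) \<in> HM k N (\<lambda>g. (\<mu> g ^ (p ^ Suc n)) ^ p)"
      by (rule one_step[OF N t hS pp pN pc B])
    have e1: "HM k N (\<lambda>g. (\<mu> g ^ (p ^ Suc n)) ^ p) = HM k N (\<lambda>g. \<mu> g ^ (p ^ Suc (Suc n)))"
      by (rule wh_cong) (simp add: power_mult[symmetric] mult.commute)
    have p0: "p > 0" using pp prime_gt_0_nat by blast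
    have e2: "HM k N (\<lambda>g. \<mu> g ^ (p ^ n)) = HM k N (\<lambda>g. \<mu> g ^ (p ^ Suc (Suc n)))"
    proof (rule wh_cong)
      fix g assume g: "g \<in> fricke_group N"
      have "(\<mu> g ^ (p ^ n)) ^ (2 * t) = 1" using hyps_pow[OF h, of "p ^ n"] g by (simp add: hyps_def)
      hence "(\<mu> g ^ (p ^ n)) ^ (p ^ 2) = \<mu> g ^ (p ^ n)" by (rule pow_p2[OF pc _ p0])
      moreover have "p ^ Suc (Suc n) = p ^ n * p ^ 2" by (simp add: power2_eq_square)
      ultimately show "\<mu> g ^ (p ^ n) = \<mu> g ^ (p ^ Suc (Suc n))"
        by (simp only: power_mult)
    qed
    have "hecke_pp k t p (Suc (Suc n)) f = (\<lambda>z. hecke_p k t p (hecke_pp k t p (Suc n) f) z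
      - complex_of_real (real p powr (of_int k - 1)) * hecke_pp k t p n f z)" by simp
    moreover have "\<dots> \<in> HM k N (\<lambda>g. \<mu> g ^ (p ^ Suc (Suc n)))"
      by (rule wh_lin) (use C e1 A e2 in auto)
    ultimately show "hecke_pp k t p (Suc n) f \<in> HM k N (\<lambda>g. \<mu> g ^ (p ^ Suc n)) \<and>
          hecke_pp k t p (Suc (Suc n)) f \<in> HM k N (\<lambda>g. \<mu> g ^ (p ^ Suc (Suc n)))" using B by simp
  qed
qed

theorem proposition2p1:
  fixes N t p n :: nat and k :: int and \<nu> :: "mat2 \<Rightarrow> complex" and f :: "complex \<Rightarrow> complex"
  assumes "N \<in> {1, 2, 3, 4}"
    and "t > 0"
    and "multiplier_system (fricke_group N) \<nu>"
    and "\<forall>g\<in>fricke_group N. \<nu> g ^ (2 * t) = 1"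
    and "\<forall>g\<in>Gamma0MN (N * t) t. \<nu> g = 1"
    and "prime p" and "\<not> p dvd N" and "[p ^ 2 = 1] (mod 2 * t)"
    and "n \<ge> 1"
    and "f \<in> weakly_holomorphic_mf k (fricke_group N) \<nu>"
  shows "hecke_pp k t p n f \<in> weakly_holomorphic_mf k (fricke_group N) (\<lambda>g. \<nu> g ^ (p ^ n))"
proof -
  have h: "hyps N t \<nu>" using assms(3-5) by (simp add: hyps_def)
  show ?thesis using iter[OF assms(1,2) h assms(6,7,8), of k n] assms(10) by blast
qed


end
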